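(* For every prime $p$ there is a finite solvable algebra $\mathbf A$ with a Malcev term such that $\mathrm{nuP}_{\mathbf A}=\mathsf{nuDet}_p$.
   Context: A finite algebra has finite universe and finitely many basic operations. An $n$-ary circuit over $\mathbf A$ is a DAG with one output node, sources labelled by variables or constants from $A$, gates labelled by basic operations; size is nodes plus edges. A NuDFA over $\mathbf A$ is $(\{t_n\}_{n\ge1},\iota,S)$ with $t_n$ an $n$-ary circuit, $\iota:\{0,1\}\to A$, $S\subseteq A$, accepting $b\in\{0,1\}^n$ iff $t_n(\iota(b_1),\dots,\iota(b_n))\in S$; polynomial size means size of $t_n$ polynomial in $n$; $\mathrm{nuP}_{\mathbf A}$ is the class of languages over $\{0,1\}$ accepted by polynomial-size NuDFAs over $\mathbf A$. A Malcev term is a ternary term $d$ with $d(x,y,y)=d(y,y,x)=x$; solvability is in the sense of commutator theory. An algebraic branching program (ABP) over $\mathrm{GF}(p)$ is a directed acyclic multigraph with one source and one sink whose edges are labelled by variables or constants of $\mathrm{GF}(p)$; it computes the polynomial equal to the sum over all source–sink paths of the product of the edge labels; its size is the number of vertices plus edges. A $\mathrm{BABP}_p$ gate is labelled by an $n$-variate ABP over $\mathrm{GF}(p)$ and an accepting set $T\subseteq\mathrm{GF}(p)$; on Boolean inputs $b\in\{0,1\}^n$ it outputs 1 iff the ABP's polynomial evaluated at $b$ lies in $T$; its size is that of the ABP. $\mathsf{nuDet}_p$ is the class of languages $L\subseteq\{0,1\}^*$ such that for each $n$, $L\cap\{0,1\}^n$ is recognized by a single $\mathrm{BABP}_p$ gate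 of size polynomial in $n$. *)

theory Defs
  imports Main "HOL-Computational_Algebra.Primes"
begin

text \<open>An algebra with universe a set of naturals (every finite algebra is isomorphic
to one of these) and a finite list of basic operations, each given by its arity and
a function on argument lists.\<close>

record alg =
  univ :: "nat set"
  ops  :: "(nat \<times> (nat list \<Rightarrow> nat)) list"

definition arity :: "alg \<Rightarrow> nat \<Rightarrow> nat" where
  "arity A f = fst (ops A ! f)"

definition opfun :: "alg \<Rightarrow> nat \<Rightarrow> nat list \<Rightarrow> nat" where
  "opfun A f = snd (ops A ! f)"

definition finite_algebra :: "alg \<Rightarrow> bool" where
  "finite_algebra A \<longleftrightarrow> finite (univ A) \<and> univ A \<noteq> {} \<and>
     (\<forall>f < length (ops A). \<forall>xs. length xs = arity A f \<and> set xs \<subseteq> univ A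
        \<longrightarrow> opfun A f xs \<in> univ A)"

datatype trm = TV nat | TAp nat "trm list"

fun wf_trm :: "alg \<Rightarrow> trm \<Rightarrow> bool" where
  "wf_trm A (TV i) = True"
| "wf_trm A (TAp f ts) = (f < length (ops A) \<and> length ts = arity A f \<and> (\<forall>t\<in>set ts. wf_trm A t))"

fun trm_vars :: "trm \<Rightarrow> nat set" where
  "trm_vars (TV i) = {i}"
| "trm_vars (TAp f ts) = (\<Union>t\<in>set ts. trm_vars t)"

fun teval :: "alg \<Rightarrow> (nat \<Rightarrow> nat) \<Rightarrow> trm \<Rightarrow> nat" where
  "teval A env (TV i) = env i"
| "teval A env (TAp f ts) = opfun A f (map (teval A env) ts)"

definition malcev_term :: "alg \<Rightarrow> trm \<Rightarrow> bool" where
  "malcev_term A d \<longleftrightarrow> wf_trm A d \<and> trm_vars d \<subseteq> {0,1,2} \<and>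
     (\<forall>x\<in>univ A. \<forall>y\<in>univ A.
        teval A (\<lambda>i. [x,y,y] ! i) d = x \<and> teval A (\<lambda>i. [y,y,x] ! i) d = x)"

definition has_malcev_term :: "alg \<Rightarrow> bool" where
  "has_malcev_term A \<longleftrightarrow> (\<exists>d. malcev_term A d)"

definition congruence :: "alg \<Rightarrow> (nat \<times> nat) set \<Rightarrow> bool" where
  "congruence A \<theta> \<longleftrightarrow> equiv (univ A) \<theta> \<and>
     (\<forall>f < length (ops A). \<forall>xs ys. length xs = arity A f \<and> length ys = arity A f \<and>
        (\<forall>i < arity A f. (xs ! i, ys ! i) \<in> \<theta>) \<longrightarrow> (opfun A f xs, opfun A f ys) \<in> \<theta>)"

text \<open>Term condition C(alpha, beta; delta): for every term t(x_0..x_{m-1}, y_m, ...),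
tuples a alpha b and c beta d: t(a,c) delta t(a,d) implies t(b,c) delta t(b,d).\<close>

definition centralizes :: "alg \<Rightarrow> (nat \<times> nat) set \<Rightarrow> (nat \<times> nat) set \<Rightarrow> (nat \<times> nat) set \<Rightarrow> bool" where
  "centralizes A \<alpha> \<beta> \<delta> \<longleftrightarrow>
     (\<forall>t m a b c d. wf_trm A t \<and> (\<forall>i. (a i, b i) \<in> \<alpha>) \<and> (\<forall>i. (c i, d i) \<in> \<beta>) \<and>
        (teval A (\<lambda>i. if i < m then a i else c i) t, teval A (\<lambda>i. if i < m then a i else d i) t) \<in> \<delta>
        \<longrightarrow> (teval A (\<lambda>i. if i < m then b i else c i) t, teval A (\<lambda>i. if i < m then b i else d i) t) \<in> \<delta>)"

definition commutator :: "alg \<Rightarrow> (nat \<times> nat) set \<Rightarrow> (nat \<times> nat) set \<Rightarrow> (nat \<times> nat) set" where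
  "commutator A \<alpha> \<beta> = \<Inter> {\<delta>. congruence A \<delta> \<and> centralizes A \<alpha> \<beta> \<delta>}"

fun derived :: "alg \<Rightarrow> nat \<Rightarrow> (nat \<times> nat) set" where
  "derived A 0 = univ A \<times> univ A"
| "derived A (Suc k) = commutator A (derived A k) (derived A k)"

definition solvable_alg :: "alg \<Rightarrow> bool" where
  "solvable_alg A \<longleftrightarrow> (\<exists>k. derived A k = Id_on (univ A))"

text \<open>A circuit is a nonempty list of nodes in topological order; a gate may only use
earlier nodes; the output node is the last one. Size = nodes + edges.\<close>

datatype cnode = CInp nat | CConst nat | CGate nat "nat list"

fun wf_cnode :: "alg \<Rightarrow> nat \<Rightarrow> nat \<Rightarrow> cnode \<Rightarrow> bool" where
  "wf_cnode A n k (CInp j) = (j < n)"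
| "wf_cnode A n k (CConst a) = (a \<in> univ A)"
| "wf_cnode A n k (CGate f args) = (f < length (ops A) \<and> length args = arity A f \<and> (\<forall>i\<in>set args. i < k))"

definition circuit :: "alg \<Rightarrow> nat \<Rightarrow> cnode list \<Rightarrow> bool" where
  "circuit A n c \<longleftrightarrow> c \<noteq> [] \<and> (\<forall>k < length c. wf_cnode A n k (c ! k))"

fun cnode_edges :: "cnode \<Rightarrow> nat" where
  "cnode_edges (CGate f args) = length args"
| "cnode_edges _ = 0"

definition circuit_size :: "cnode list \<Rightarrow> nat" where
  "circuit_size c = length c + sum_list (map cnode_edges c)"

fun cnode_val :: "alg \<Rightarrow> nat list \<Rightarrow> nat list \<Rightarrow> cnode \<Rightarrow> nat" where
  "cnode_val A x vals (CInp j) = x ! j"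
| "cnode_val A x vals (CConst a) = a"
| "cnode_val A x vals (CGate f args) = opfun A f (map (\<lambda>i. vals ! i) args)"

definition circuit_vals :: "alg \<Rightarrow> cnode list \<Rightarrow> nat list \<Rightarrow> nat list" where
  "circuit_vals A c x = foldl (\<lambda>vals nd. vals @ [cnode_val A x vals nd]) [] c"

definition circuit_eval :: "alg \<Rightarrow> cnode list \<Rightarrow> nat list \<Rightarrow> nat" where
  "circuit_eval A c x = last (circuit_vals A c x)"

definition nudfa_accepts :: "alg \<Rightarrow> (nat \<Rightarrow> cnode list) \<Rightarrow> (bool \<Rightarrow> nat) \<Rightarrow> nat set \<Rightarrow> bool list \<Rightarrow> bool" where
  "nudfa_accepts A t \<iota> S w \<longleftrightarrow> circuit_eval A (t (length w)) (map \<iota> w) \<in> S"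

definition nuP :: "alg \<Rightarrow> bool list set set" where
  "nuP A = {L. \<exists>t \<iota> S (c::nat) (k::nat).
      (\<forall>n. circuit A n (t n) \<and> circuit_size (t n) \<le> c * (n + 1) ^ k) \<and>
      \<iota> True \<in> univ A \<and> \<iota> False \<in> univ A \<and> S \<subseteq> univ A \<and>
      L = {w. nudfa_accepts A t \<iota> S w}}"

text \<open>GF(p) is represented by residues {0..<p}. An ABP has vertices 0..nv-1 (topologically
ordered, every edge goes from a smaller to a larger vertex), source 0, sink nv-1, and a
list of labelled edges (a multigraph).\<close>

datatype alab = LVar nat | LConst nat

record abp =
  nv :: nat
  edges :: "(nat \<times> nat \<times> alab) list"

definition wf_abp :: "nat \<Rightarrow> nat \<Rightarrow> abp \<Rightarrow> bool" where
  "wf_abp p n G \<longleftrightarrow> nv G \<ge> 1 \<and>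
     (\<forall>(u, v, l) \<in> set (edges G). u < v \<and> v < nv G \<and>
        (case l of LVar i \<Rightarrow> i < n | LConst a \<Rightarrow> a < p))"

definition abp_size :: "abp \<Rightarrow> nat" where
  "abp_size G = nv G + length (edges G)"

fun abp_walk :: "abp \<Rightarrow> nat \<Rightarrow> nat list \<Rightarrow> bool" where
  "abp_walk G u [] = (u = nv G - 1)"
| "abp_walk G u (e # es) = (e < length (edges G) \<and> fst (edges G ! e) = u \<and>
      abp_walk G (fst (snd (edges G ! e))) es)"

definition abp_paths :: "abp \<Rightarrow> nat list set" where
  "abp_paths G = {es. abp_walk G 0 es}"

fun alab_val :: "bool list \<Rightarrow> alab \<Rightarrow> nat" where
  "alab_val b (LVar i) = (if b ! i then 1 else 0)"
| "alab_val b (LConst a) = a"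

definition abp_value :: "nat \<Rightarrow> abp \<Rightarrow> bool list \<Rightarrow> nat" where
  "abp_value p G b =
     (\<Sum>es\<in>abp_paths G. prod_list (map (\<lambda>e. alab_val b (snd (snd (edges G ! e)))) es)) mod p"

definition nuDet :: "nat \<Rightarrow> bool list set set" where
  "nuDet p = {L. \<exists>(c::nat) (k::nat). \<forall>n. \<exists>G T.
      wf_abp p n G \<and> abp_size G \<le> c * (n + 1) ^ k \<and> T \<subseteq> {0..<p} \<and>
      (\<forall>w. length w = n \<longrightarrow> (w \<in> L \<longleftrightarrow> abp_value p G w \<in> T))}"

end

theory Submission
  imports Defs "HOL-Number_Theory.Residues"
begin

definition d1 :: "nat \<Rightarrow> nat \<Rightarrow> nat" where "d1 p x = x div p mod p"
definition d2 :: "nat \<Rightarrow> nat \<Rightarrow> nat" where "d2 p x = x mod p"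
definition enc :: "nat \<Rightarrow> nat \<Rightarrow> nat \<Rightarrow> nat" where "enc p a b = a * p + b"
definition md :: "nat \<Rightarrow> int \<Rightarrow> nat" where "md p z = nat (z mod int p)"

definition mop :: "nat \<Rightarrow> nat list \<Rightarrow> nat" where
  "mop p xs = enc p (md p (int (d1 p (xs!0)) - int (d1 p (xs!1)) + int (d1 p (xs!2))))
                    (md p (int (d2 p (xs!0)) - int (d2 p (xs!1)) + int (d2 p (xs!2))))"
definition maop :: "nat \<Rightarrow> nat list \<Rightarrow> nat" where
  "maop p xs = enc p (d1 p (xs!2)) ((d2 p (xs!2) + d1 p (xs!0) * d2 p (xs!1)) mod p)"

definition Aalg :: "nat \<Rightarrow> alg" where
  "Aalg p = \<lparr>univ = {..<p*p}, ops = [(3, mop p), (3, maop p)]\<rparr>"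

lemma A_simps[simp]: "univ (Aalg p) = {..<p*p}" "length (ops (Aalg p)) = 2"
  by (auto simp: Aalg_def)

lemma A_arity: "f < 2 \<Longrightarrow> arity (Aalg p) f = 3"
  by (auto simp: Aalg_def arity_def less_2_cases_iff)

lemma A_opfun0[simp]: "opfun (Aalg p) 0 = mop p" and A_opfun1[simp]: "opfun (Aalg p) (Suc 0) = maop p"
  by (auto simp: Aalg_def opfun_def)

lemma md_lt: "0 < p \<Longrightarrow> md p z < p"
  unfolding md_def by (simp add: nat_less_iff)
lemma int_md: "0 < p \<Longrightarrow> int (md p z) = z mod int p"
  unfolding md_def by simp
lemma d1_lt: "0 < p \<Longrightarrow> d1 p x < p" unfolding d1_def by simp
lemma d2_lt: "0 < p \<Longrightarrow> d2 p x < p" unfolding d2_def by simp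
lemma enc_lt: "a < p \<Longrightarrow> b < p \<Longrightarrow> enc p a b < p * p"
proof -
  assume "a < p" "b < p"
  then have "a * p + b < a * p + p" by simp
  also have "\<dots> = (a+1) * p" by simp
  also have "\<dots> \<le> p * p" using \<open>a<p\<close> by (intro mult_right_mono) auto
  finally show ?thesis unfolding enc_def .
qed
lemma d1_enc[simp]: "a < p \<Longrightarrow> b < p \<Longrightarrow> d1 p (enc p a b) = a"
  unfolding d1_def enc_def by simp
lemma d2_enc[simp]: "b < p \<Longrightarrow> d2 p (enc p a b) = b"
  unfolding d2_def enc_def by simp
lemma enc_dec: "x < p * p \<Longrightarrow> enc p (d1 p x) (d2 p x) = x"
  unfolding d1_def d2_def enc_def
  by (metis div_mult_mod_eq less_mult_imp_div_less mod_less)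
lemma dec_eq: "x < p * p \<Longrightarrow> y < p * p \<Longrightarrow> d1 p x = d1 p y \<Longrightarrow> d2 p x = d2 p y \<Longrightarrow> x = y"
  by (metis enc_dec)
lemma enc_inj: "a < p \<Longrightarrow> b < p \<Longrightarrow> a' < p \<Longrightarrow> b' < p \<Longrightarrow> enc p a b = enc p a' b' \<longleftrightarrow> a = a' \<and> b = b'"
  by (metis d1_enc d2_enc)

lemma mop_lt: "0 < p \<Longrightarrow> mop p xs < p * p"
  unfolding mop_def by (simp add: enc_lt md_lt)
lemma maop_lt: "0 < p \<Longrightarrow> maop p xs < p * p"
  unfolding maop_def by (simp add: enc_lt d1_lt)

lemma d1_mop: "0 < p \<Longrightarrow> d1 p (mop p xs) = md p (int (d1 p (xs!0)) - int (d1 p (xs!1)) + int (d1 p (xs!2)))"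
  unfolding mop_def by (simp add: md_lt)
lemma d2_mop: "0 < p \<Longrightarrow> d2 p (mop p xs) = md p (int (d2 p (xs!0)) - int (d2 p (xs!1)) + int (d2 p (xs!2)))"
  unfolding mop_def by (simp add: md_lt)
lemma d1_maop: "0 < p \<Longrightarrow> d1 p (maop p xs) = d1 p (xs!2)"
  unfolding maop_def by (simp add: d1_lt)
lemma d2_maop: "0 < p \<Longrightarrow> d2 p (maop p xs) = (d2 p (xs!2) + d1 p (xs!0) * d2 p (xs!1)) mod p"
  unfolding maop_def by (simp add: d1_lt)

lemma opfun_lt: "0 < p \<Longrightarrow> f < 2 \<Longrightarrow> opfun (Aalg p) f xs < p * p"
  by (auto simp: less_2_cases_iff mop_lt maop_lt)

lemma finite_A: "1 < p \<Longrightarrow> finite_algebra (Aalg p)"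
  unfolding finite_algebra_def using opfun_lt[of p] by (auto simp: lessThan_empty_iff)

lemma md_nat: "a < p \<Longrightarrow> md p (int a) = a"
  unfolding md_def by simp

lemma malcev_A: "0 < p \<Longrightarrow> has_malcev_term (Aalg p)"
  unfolding has_malcev_term_def malcev_term_def
  apply (rule exI[of _ "TAp 0 [TV 0, TV 1, TV 2]"])
  apply (auto simp: A_arity)
   apply (simp_all add: mop_def md_nat d1_lt d2_lt enc_dec)
  done


lemma teval_lt:
  assumes "0 < p" "wf_trm (Aalg p) t" "\<forall>i. env i < p * p"
  shows "teval (Aalg p) env t < p * p"
  using assms by (cases t) (auto simp: opfun_lt)

lemma wf_TAp: "wf_trm (Aalg p) (TAp f ts) \<Longrightarrow> f < 2 \<and> length ts = 3"
  by (auto simp: A_arity)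

lemma T1:
  assumes "0 < p" "wf_trm (Aalg p) t" "\<forall>i. d1 p (e i) = d1 p (e' i)"
  shows "d1 p (teval (Aalg p) e t) = d1 p (teval (Aalg p) e' t)"
  using assms(2)
proof (induction t)
  case (TV x)
  then show ?case using assms by simp
next
  case (TAp f ts)
  have f: "f < 2" and l: "length ts = 3" using TAp.prems wf_TAp by blast+
  have IH: "\<And>i. i < 3 \<Longrightarrow> d1 p (teval (Aalg p) e (ts!i)) = d1 p (teval (Aalg p) e' (ts!i))"
    using TAp l by (metis nth_mem wf_trm.simps(2))
  show ?case
  proof (cases "f = 0")
    case True
    then show ?thesis using l IH[of 0] IH[of 1] IH[of 2] assms(1) by (simp add: d1_mop)
  next
    case False
    then have "f = Suc 0" using f by simp
    then show ?thesis using l IH[of 2] assms(1) by (simp add: d1_maop)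
  qed
qed

definition cz :: "nat \<Rightarrow> nat \<Rightarrow> nat \<Rightarrow> nat \<Rightarrow> nat \<Rightarrow> bool" where
  "cz p a b c d \<longleftrightarrow> (int a - int b - int c + int d) mod int p = 0"

lemma cz_md:
  assumes "0 < p" "cz p (md p x0) (md p x1) (md p x2) (md p x3) = ((x0 - x1 - x2 + x3) mod int p = 0)"
  shows True by simp

lemma modc: "((x::int) mod m - y mod m - z mod m + w mod m) mod m = (x - y - z + w) mod m"
proof -
  have "((x mod m - y mod m - z mod m) + w mod m) mod m = ((x mod m - y mod m - z mod m) + w) mod m"
    by (simp add: mod_add_right_eq)
  also have "((x mod m - y mod m) - z mod m + w) mod m = (((x mod m - y mod m) - z mod m) mod m + w) mod m"
    by (simp add: mod_add_left_eq)
  also have "((x mod m - y mod m) - z mod m) mod m = ((x mod m - y mod m) - z) mod m"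
    by (simp add: mod_diff_right_eq)
  also have "((x mod m - y mod m) - z) mod m = ((x mod m - y mod m) mod m - z) mod m"
    by (rule mod_diff_left_eq[symmetric])
  also have "(x mod m - y mod m) mod m = (x - y) mod m" by (simp add: mod_diff_eq)
  also have "((x - y) mod m - z) mod m = (x - y - z) mod m" by (simp add: mod_diff_left_eq)
  also have "((x - y - z) mod m + w) mod m = (x - y - z + w) mod m" by (simp add: mod_add_left_eq)
  finally show ?thesis .
qed

lemma cz_md3:
  assumes p: "0 < p"
    and h0: "cz p a0 b0 c0 e0" and h1: "cz p a1 b1 c1 e1" and h2: "cz p a2 b2 c2 e2"
  shows "cz p (md p (int a0 - int a1 + int a2)) (md p (int b0 - int b1 + int b2))
              (md p (int c0 - int c1 + int c2)) (md p (int e0 - int e1 + int e2))"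
proof -
  have E: "(int a0 - int b0 - int c0 + int e0) - (int a1 - int b1 - int c1 + int e1)
        + (int a2 - int b2 - int c2 + int e2)
     = (int a0 - int a1 + int a2) - (int b0 - int b1 + int b2) - (int c0 - int c1 + int c2)
        + (int e0 - int e1 + int e2)" by simp
  have M: "((int a0 - int b0 - int c0 + int e0) - (int a1 - int b1 - int c1 + int e1)
        + (int a2 - int b2 - int c2 + int e2)) mod int p = 0"
    using h0 h1 h2 unfolding cz_def dvd_eq_mod_eq_0[symmetric] by (metis dvd_add dvd_diff)
  from M have "((int a0 - int a1 + int a2) - (int b0 - int b1 + int b2) - (int c0 - int c1 + int c2)
        + (int e0 - int e1 + int e2)) mod int p = 0" unfolding E .
  then show ?thesis using p unfolding cz_def by (simp add: int_md modc)
qed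

lemma T2:
  assumes p: "0 < p" and "wf_trm (Aalg p) t"
    and h: "\<forall>i. cz p (d1 p (e i)) (d1 p (e' i)) (d1 p (f i)) (d1 p (f' i))"
  shows "cz p (d1 p (teval (Aalg p) e t)) (d1 p (teval (Aalg p) e' t))
              (d1 p (teval (Aalg p) f t)) (d1 p (teval (Aalg p) f' t))"
  using assms(2)
proof (induction t)
  case (TV x)
  then show ?case using h by simp
next
  case (TAp g ts)
  have g: "g < 2" and l: "length ts = 3" using TAp.prems wf_TAp by blast+
  have IH: "\<And>i. i < 3 \<Longrightarrow> cz p (d1 p (teval (Aalg p) e (ts!i))) (d1 p (teval (Aalg p) e' (ts!i)))
              (d1 p (teval (Aalg p) f (ts!i))) (d1 p (teval (Aalg p) f' (ts!i)))"
    using TAp l by (metis nth_mem wf_trm.simps(2))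
  show ?case
  proof (cases "g = 0")
    case True
    then show ?thesis using l IH[of 0] IH[of 1] IH[of 2] p by (simp add: d1_mop cz_md3)
  next
    case False
    then have "g = Suc 0" using g by simp
    then show ?thesis using l IH[of 2] p by (simp add: d1_maop)
  qed
qed

lemma cz_ma:
  assumes p: "0 < p" and h1: "cz p a1 b1 c1 e1" and h2: "cz p a2 b2 c2 e2"
  shows "cz p ((a2 + k * a1) mod p) ((b2 + k * b1) mod p) ((c2 + k * c1) mod p) ((e2 + k * e1) mod p)"
proof -
  have "int (a2 + k * a1) - int (b2 + k * b1) - int (c2 + k * c1) + int (e2 + k * e1)
      = (int a2 - int b2 - int c2 + int e2) + int k * (int a1 - int b1 - int c1 + int e1)"
    by (simp add: algebra_simps)
  moreover have "((int a2 - int b2 - int c2 + int e2) + int k * (int a1 - int b1 - int c1 + int e1)) mod int p = 0"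
    using h1 h2 unfolding cz_def dvd_eq_mod_eq_0[symmetric] by (metis dvd_add dvd_mult)
  ultimately show ?thesis unfolding cz_def by (simp only: of_nat_mod modc)
qed

lemma T3:
  assumes p: "0 < p" and "wf_trm (Aalg p) t"
    and hd: "\<forall>i. d1 p (e' i) = d1 p (e i) \<and> d1 p (f i) = d1 p (e i) \<and> d1 p (f' i) = d1 p (e i)"
    and h: "\<forall>i. cz p (d2 p (e i)) (d2 p (e' i)) (d2 p (f i)) (d2 p (f' i))"
  shows "cz p (d2 p (teval (Aalg p) e t)) (d2 p (teval (Aalg p) e' t))
              (d2 p (teval (Aalg p) f t)) (d2 p (teval (Aalg p) f' t))"
  using assms(2)
proof (induction t)
  case (TV x)
  then show ?case using h by simp
next
  case (TAp g ts)
  have g: "g < 2" and l: "length ts = 3" using TAp.prems wf_TAp by blast+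
  have wfi: "\<And>i. i < 3 \<Longrightarrow> wf_trm (Aalg p) (ts!i)"
    using TAp.prems l by (metis nth_mem wf_trm.simps(2))
  have IH: "\<And>i. i < 3 \<Longrightarrow> cz p (d2 p (teval (Aalg p) e (ts!i))) (d2 p (teval (Aalg p) e' (ts!i)))
              (d2 p (teval (Aalg p) f (ts!i))) (d2 p (teval (Aalg p) f' (ts!i)))"
    using TAp l by (metis nth_mem wf_trm.simps(2))
  show ?case
  proof (cases "g = 0")
    case True
    then show ?thesis using l IH[of 0] IH[of 1] IH[of 2] p by (simp add: d2_mop cz_md3)
  next
    case False
    then have g1: "g = Suc 0" using g by simp
    have k1: "d1 p (teval (Aalg p) e' (ts!0)) = d1 p (teval (Aalg p) e (ts!0))"
      by (rule T1[OF p wfi]) (use hd in auto)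
    have k2: "d1 p (teval (Aalg p) f (ts!0)) = d1 p (teval (Aalg p) e (ts!0))"
      by (rule T1[OF p wfi]) (use hd in auto)
    have k3: "d1 p (teval (Aalg p) f' (ts!0)) = d1 p (teval (Aalg p) e (ts!0))"
      by (rule T1[OF p wfi]) (use hd in auto)
    show ?thesis using l g1 p k1 k2 k3 cz_ma[OF p IH[of 1] IH[of 2]] by (simp add: d2_maop)
  qed
qed

definition th :: "nat \<Rightarrow> (nat \<times> nat) set" where
  "th p = {(x,y). x < p*p \<and> y < p*p \<and> d1 p x = d1 p y}"

lemma cong_th: "0 < p \<Longrightarrow> congruence (Aalg p) (th p)"
  unfolding congruence_def
proof (intro conjI allI impI)
  assume p: "0 < p"
  show "equiv (univ (Aalg p)) (th p)"
    unfolding equiv_def refl_on_def sym_def trans_def th_def by auto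
  fix f xs ys
  assume f: "f < length (ops (Aalg p))" and h: "length xs = arity (Aalg p) f \<and> length ys = arity (Aalg p) f \<and>
       (\<forall>i<arity (Aalg p) f. (xs ! i, ys ! i) \<in> th p)"
  then have f2: "f < 2" by simp
  then have h': "\<forall>i<3. d1 p (xs!i) = d1 p (ys!i)" using h A_arity[OF f2] unfolding th_def by auto
  show "(opfun (Aalg p) f xs, opfun (Aalg p) f ys) \<in> th p"
  proof (cases "f = 0")
    case True
    then show ?thesis using h' p unfolding th_def by (simp add: mop_lt d1_mop)
  next
    case False
    then have "f = Suc 0" using f2 by simp
    then show ?thesis using h' p unfolding th_def by (simp add: maop_lt d1_maop)
  qed
qed

lemma cong_Id: "0 < p \<Longrightarrow> congruence (Aalg p) (Id_on (univ (Aalg p)))"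
  unfolding congruence_def
proof (intro conjI allI impI)
  assume p: "0 < p"
  show "equiv (univ (Aalg p)) (Id_on (univ (Aalg p)))"
    unfolding equiv_def refl_on_def sym_def trans_def by auto
  fix f xs ys
  assume f: "f < length (ops (Aalg p))" and h: "length xs = arity (Aalg p) f \<and> length ys = arity (Aalg p) f \<and>
       (\<forall>i<arity (Aalg p) f. (xs ! i, ys ! i) \<in> Id_on (univ (Aalg p)))"
  then have "length xs = length ys" "\<forall>i<length xs. xs!i = ys!i" by auto
  then have "xs = ys" by (simp add: nth_equalityI)
  moreover have "opfun (Aalg p) f xs < p * p" using f p opfun_lt by simp
  ultimately show "(opfun (Aalg p) f xs, opfun (Aalg p) f ys) \<in> Id_on (univ (Aalg p))" by (auto simp: Id_on_def)
qed

lemma cent1: "0 < p \<Longrightarrow> centralizes (Aalg p) (univ (Aalg p) \<times> univ (Aalg p)) (univ (Aalg p) \<times> univ (Aalg p)) (th p)"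
  unfolding centralizes_def
proof (intro allI impI)
  fix t m a b c d
  assume p: "0 < p" and H: "wf_trm (Aalg p) t \<and>
       (\<forall>i. (a i, b i) \<in> univ (Aalg p) \<times> univ (Aalg p)) \<and>
       (\<forall>i. (c i, d i) \<in> univ (Aalg p) \<times> univ (Aalg p)) \<and>
       (teval (Aalg p) (\<lambda>i. if i < m then a i else c i) t,
        teval (Aalg p) (\<lambda>i. if i < m then a i else d i) t) \<in> th p"
  let ?ac = "\<lambda>i. if i < m then a i else c i"
  let ?ad = "\<lambda>i. if i < m then a i else d i"
  let ?bc = "\<lambda>i. if i < m then b i else c i"
  let ?bd = "\<lambda>i. if i < m then b i else d i"
  have wf: "wf_trm (Aalg p) t" using H by blast
  have lt: "\<forall>i. a i < p*p \<and> b i < p*p \<and> c i < p*p \<and> d i < p*p" using H by auto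
  have "cz p (d1 p (teval (Aalg p) ?ac t)) (d1 p (teval (Aalg p) ?ad t))
              (d1 p (teval (Aalg p) ?bc t)) (d1 p (teval (Aalg p) ?bd t))"
    by (rule T2[OF p wf]) (auto simp: cz_def)
  moreover have "d1 p (teval (Aalg p) ?ac t) = d1 p (teval (Aalg p) ?ad t)" using H unfolding th_def by auto
  ultimately have "int (d1 p (teval (Aalg p) ?bd t)) mod int p = int (d1 p (teval (Aalg p) ?bc t)) mod int p"
    unfolding cz_def by (simp add: mod_eq_dvd_iff dvd_eq_mod_eq_0[symmetric] dvd_minus_iff)
  then have "d1 p (teval (Aalg p) ?bd t) = d1 p (teval (Aalg p) ?bc t)"
    using d1_lt[OF p] by simp
  moreover have "teval (Aalg p) ?bc t < p*p" "teval (Aalg p) ?bd t < p*p"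
    using teval_lt[OF p wf] lt by auto
  ultimately show "(teval (Aalg p) ?bc t, teval (Aalg p) ?bd t) \<in> th p" unfolding th_def by simp
qed

lemma cent2: "0 < p \<Longrightarrow> centralizes (Aalg p) (th p) (th p) (Id_on (univ (Aalg p)))"
  unfolding centralizes_def
proof (intro allI impI)
  fix t m a b c d
  assume p: "0 < p" and H: "wf_trm (Aalg p) t \<and>
       (\<forall>i. (a i, b i) \<in> th p) \<and> (\<forall>i. (c i, d i) \<in> th p) \<and>
       (teval (Aalg p) (\<lambda>i. if i < m then a i else c i) t,
        teval (Aalg p) (\<lambda>i. if i < m then a i else d i) t) \<in> Id_on (univ (Aalg p))"
  let ?ac = "\<lambda>i. if i < m then a i else c i"
  let ?ad = "\<lambda>i. if i < m then a i else d i"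
  let ?bc = "\<lambda>i. if i < m then b i else c i"
  let ?bd = "\<lambda>i. if i < m then b i else d i"
  have wf: "wf_trm (Aalg p) t" using H by blast
  have lt: "\<forall>i. a i < p*p \<and> b i < p*p \<and> c i < p*p \<and> d i < p*p" using H unfolding th_def by auto
  have hd: "\<forall>i. d1 p (a i) = d1 p (b i) \<and> d1 p (c i) = d1 p (d i)" using H unfolding th_def by auto
  have "cz p (d2 p (teval (Aalg p) ?ac t)) (d2 p (teval (Aalg p) ?ad t))
              (d2 p (teval (Aalg p) ?bc t)) (d2 p (teval (Aalg p) ?bd t))"
    by (rule T3[OF p wf]) (use hd in \<open>auto simp: cz_def\<close>)
  moreover have "teval (Aalg p) ?ac t = teval (Aalg p) ?ad t" using H by auto
  ultimately have "int (d2 p (teval (Aalg p) ?bd t)) mod int p = int (d2 p (teval (Aalg p) ?bc t)) mod int p"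
    unfolding cz_def by (simp add: mod_eq_dvd_iff dvd_eq_mod_eq_0[symmetric] dvd_minus_iff)
  then have e2: "d2 p (teval (Aalg p) ?bd t) = d2 p (teval (Aalg p) ?bc t)"
    using d2_lt[OF p] by simp
  have e1: "d1 p (teval (Aalg p) ?bd t) = d1 p (teval (Aalg p) ?bc t)"
    by (rule T1[OF p wf]) (use hd in auto)
  have "teval (Aalg p) ?bc t < p*p" "teval (Aalg p) ?bd t < p*p"
    using teval_lt[OF p wf] lt by auto
  then have "teval (Aalg p) ?bc t = teval (Aalg p) ?bd t" using dec_eq e1 e2 by metis
  then show "(teval (Aalg p) ?bc t, teval (Aalg p) ?bd t) \<in> Id_on (univ (Aalg p))"
    using \<open>teval (Aalg p) ?bc t < p*p\<close> by (auto simp: Id_on_def)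
qed

lemma cent_mono: "centralizes A \<alpha> \<beta> \<delta> \<Longrightarrow> \<alpha>' \<subseteq> \<alpha> \<Longrightarrow> \<beta>' \<subseteq> \<beta> \<Longrightarrow> centralizes A \<alpha>' \<beta>' \<delta>"
  unfolding centralizes_def by blast

lemma solvable_A: "0 < p \<Longrightarrow> solvable_alg (Aalg p)"
proof -
  assume p: "0 < p"
  let ?A = "Aalg p"
  have d1: "Defs.derived ?A (Suc 0) \<subseteq> th p"
    using cong_th[OF p] cent1[OF p] by (auto simp: commutator_def)
  have "Defs.derived ?A 2 \<subseteq> Id_on (univ ?A)"
  proof -
    have "centralizes ?A (Defs.derived ?A (Suc 0)) (Defs.derived ?A (Suc 0)) (Id_on (univ ?A))"
      using cent_mono[OF cent2[OF p] d1 d1] .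
    then have "Id_on (univ ?A) \<in> {\<delta>. congruence ?A \<delta> \<and> centralizes ?A (Defs.derived ?A (Suc 0)) (Defs.derived ?A (Suc 0)) \<delta>}"
      using cong_Id[OF p] by blast
    then have "commutator ?A (Defs.derived ?A (Suc 0)) (Defs.derived ?A (Suc 0)) \<subseteq> Id_on (univ ?A)"
      unfolding commutator_def by (rule Inter_lower)
    then show ?thesis unfolding numeral_2_eq_2 by (simp del: Defs.derived.simps(2) add: Defs.derived.simps(2)[of _ "Suc 0"])
  qed
  moreover have "Id_on (univ ?A) \<subseteq> Defs.derived ?A 2"
    unfolding numeral_2_eq_2 Defs.derived.simps(2) commutator_def congruence_def equiv_def refl_on_def
    by blast
  ultimately show ?thesis unfolding solvable_alg_def by blast
qed


type_synonym sprog = "(alab \<times> nat) list list"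

definition snode :: "bool list \<Rightarrow> nat list \<Rightarrow> (alab \<times> nat) list \<Rightarrow> nat" where
  "snode b vs ts = sum_list (map (\<lambda>(l,j). alab_val b l * vs ! j) ts)"
definition svb :: "nat \<Rightarrow> bool list \<Rightarrow> sprog \<Rightarrow> nat list" where
  "svb \<beta> b P = foldl (\<lambda>vs ts. vs @ [snode b vs ts]) [\<beta>] P"
definition sv :: "bool list \<Rightarrow> sprog \<Rightarrow> nat" where
  "sv b P = last (svb 1 b P)"
definition labok :: "nat \<Rightarrow> nat \<Rightarrow> alab \<Rightarrow> bool" where
  "labok p n l = (case l of LVar i \<Rightarrow> i < n | LConst a \<Rightarrow> a < p)"
definition swf :: "nat \<Rightarrow> nat \<Rightarrow> sprog \<Rightarrow> bool" where
  "swf p n P \<longleftrightarrow> (\<forall>k<length P. \<forall>(l,j)\<in>set (P!k). j \<le> k \<and> labok p n l)"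
definition ssize :: "sprog \<Rightarrow> nat" where
  "ssize P = length P + sum_list (map length P)"

lemma svb_Nil[simp]: "svb \<beta> b [] = [\<beta>]" by (simp add: svb_def)
lemma svb_snoc[simp]: "svb \<beta> b (P @ [ts]) = svb \<beta> b P @ [snode b (svb \<beta> b P) ts]"
  by (simp add: svb_def)
lemma length_svb[simp]: "length (svb \<beta> b P) = Suc (length P)"
  by (induction P rule: rev_induct) auto
lemma svb_ne[simp]: "svb \<beta> b P \<noteq> []"
  using length_svb[of \<beta> b P] by (metis Zero_not_Suc list.size(3))
lemma svb_prefix: "i \<le> length P \<Longrightarrow> svb \<beta> b (P @ Q) ! i = svb \<beta> b P ! i"
proof (induction Q rule: rev_induct)
  case Nil then show ?case by simp
next
  case (snoc x xs)
  then show ?case by (simp add: nth_append flip: append_assoc)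
qed
lemma svb_0: "svb \<beta> b P ! 0 = \<beta>"
  using svb_prefix[of 0 "[]" \<beta> b P] by simp
lemma sv_nth: "sv b P = svb 1 b P ! length P"
  unfolding sv_def by (simp add: last_conv_nth)
lemma svb_last_snoc: "svb \<beta> b (P @ [ts]) ! Suc (length P) = snode b (svb \<beta> b P) ts"
  by (simp add: nth_append)
lemma sv_snoc: "sv b (P @ [ts]) = snode b (svb 1 b P) ts"
  unfolding sv_def by simp

lemma snode_cong: "(\<forall>(l,j)\<in>set ts. vs!j = vs'!j) \<Longrightarrow> snode b vs ts = snode b vs' ts"
  unfolding snode_def by (induction ts) auto
lemma snode_mult: "(\<forall>(l,j)\<in>set ts. vs!j = c * vs'!j) \<Longrightarrow> snode b vs ts = c * snode b vs' ts"
  unfolding snode_def by (induction ts) (auto simp: algebra_simps)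
lemma snode_append: "snode b vs (ts @ us) = snode b vs ts + snode b vs us"
  unfolding snode_def by simp
lemma snode_Cons: "snode b vs (t # us) = alab_val b (fst t) * vs ! snd t + snode b vs us"
  unfolding snode_def by (cases t) simp
lemma snode_Nil[simp]: "snode b vs [] = 0"
  unfolding snode_def by simp

lemma swf_Nil[simp]: "swf p n []" by (simp add: swf_def)
lemma swf_snoc: "swf p n (P @ [ts]) \<longleftrightarrow> swf p n P \<and> (\<forall>(l,j)\<in>set ts. j \<le> length P \<and> labok p n l)"
  unfolding swf_def by (auto simp: nth_append less_Suc_eq)
lemma ssize_append[simp]: "ssize (P @ Q) = ssize P + ssize Q"
  unfolding ssize_def by simp
lemma ssize_Nil[simp]: "ssize [] = 0" unfolding ssize_def by simp
lemma ssize_single[simp]: "ssize [ts] = Suc (length ts)" unfolding ssize_def by simp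

lemma svb_lin:
  assumes "swf p n P" "i \<le> length P"
  shows "svb \<beta> b P ! i = \<beta> * svb 1 b P ! i"
  using assms
proof (induction P arbitrary: i rule: rev_induct)
  case Nil then show ?case by simp
next
  case (snoc ts P)
  have wf: "swf p n P" and tsw: "\<forall>(l,j)\<in>set ts. j \<le> length P" using snoc.prems swf_snoc by blast+
  show ?case
  proof (cases "i \<le> length P")
    case True
    then show ?thesis using snoc.IH[OF wf] by (simp add: nth_append)
  next
    case False
    then have i: "i = Suc (length P)" using snoc.prems by simp
    have "snode b (svb \<beta> b P) ts = \<beta> * snode b (svb 1 b P) ts"
      by (rule snode_mult) (use tsw snoc.IH[OF wf] in auto)
    then show ?thesis using i by (simp add: nth_append)
  qed
qed

definition shiftP :: "nat \<Rightarrow> sprog \<Rightarrow> sprog" where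
  "shiftP d P = map (map (\<lambda>(l,j). (l, j + d))) P"

lemma shiftP_snoc[simp]: "shiftP d (P @ [ts]) = shiftP d P @ [map (\<lambda>(l,j). (l, j + d)) ts]"
  by (simp add: shiftP_def)
lemma shiftP_Nil[simp]: "shiftP d [] = []" by (simp add: shiftP_def)
lemma length_shiftP[simp]: "length (shiftP d P) = length P" by (simp add: shiftP_def)
lemma ssize_shiftP[simp]: "ssize (shiftP d P) = ssize P"
  unfolding ssize_def shiftP_def by (simp add: comp_def)

lemma snode_shift: "length X = L \<Longrightarrow> snode b (X @ Y) (map (\<lambda>(l,j). (l, j + L)) ts) = snode b Y ts"
  unfolding snode_def by (induction ts) (auto simp: nth_append)

lemma svb_shift:
  "svb 1 b (R @ shiftP (length R) P) = butlast (svb 1 b R) @ svb (sv b R) b P"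
proof (induction P rule: rev_induct)
  case Nil
  then show ?case unfolding sv_def by simp
next
  case (snoc ts P)
  have L: "length (butlast (svb 1 b R)) = length R" by simp
  have "svb 1 b (R @ shiftP (length R) (P @ [ts])) = svb 1 b ((R @ shiftP (length R) P) @ [map (\<lambda>(l,j). (l, j + length R)) ts])"
    by simp
  also have "\<dots> = svb 1 b (R @ shiftP (length R) P) @ [snode b (svb 1 b (R @ shiftP (length R) P)) (map (\<lambda>(l,j). (l, j + length R)) ts)]"
    by (rule svb_snoc)
  also have "\<dots> = (butlast (svb 1 b R) @ svb (sv b R) b P) @ [snode b (svb (sv b R) b P) ts]"
    unfolding snoc.IH snode_shift[OF L] ..
  also have "\<dots> = butlast (svb 1 b R) @ svb (sv b R) b (P @ [ts])"
    by simp
  finally show ?case .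
qed

lemma swf_shift:
  assumes "swf p n R" "swf p n P"
  shows "swf p n (R @ shiftP (length R) P)"
  using assms(2)
proof (induction P rule: rev_induct)
  case Nil then show ?case using assms(1) by simp
next
  case (snoc ts P)
  then show ?case by (auto simp: swf_snoc simp flip: append_assoc)
qed

definition smul :: "sprog \<Rightarrow> sprog \<Rightarrow> sprog" where
  "smul P Q = Q @ shiftP (length Q) P"

lemma sv_smul: "swf p n P \<Longrightarrow> sv b (smul P Q) = sv b Q * sv b P"
proof -
  assume wf: "swf p n P"
  have "sv b (smul P Q) = last (butlast (svb 1 b Q) @ svb (sv b Q) b P)"
    unfolding smul_def sv_def svb_shift ..
  also have "\<dots> = last (svb (sv b Q) b P)" by simp
  also have "\<dots> = svb (sv b Q) b P ! length P" by (simp add: last_conv_nth)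
  also have "\<dots> = sv b Q * svb 1 b P ! length P" by (rule svb_lin[OF wf]) simp
  finally show ?thesis by (simp add: sv_nth)
qed

definition sadd :: "sprog \<Rightarrow> sprog \<Rightarrow> sprog" where
  "sadd P Q = (let R = P @ [[(LConst 1, 0)]] in
     R @ shiftP (length R) Q @ [[(LConst 1, length P), (LConst 1, length R + length Q)]])"

lemma sv_sadd: "sv b (sadd P Q) = sv b P + sv b Q"
proof -
  let ?R = "P @ [[(LConst 1, 0)]]"
  have R1: "sv b ?R = 1" by (simp add: sv_snoc snode_def svb_0)
  have V: "svb 1 b (?R @ shiftP (length ?R) Q) = svb 1 b P @ svb 1 b Q"
    using svb_shift[of b ?R Q] R1 by simp
  have "sadd P Q = (?R @ shiftP (length ?R) Q) @ [[(LConst 1, length P), (LConst 1, length ?R + length Q)]]"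
    unfolding sadd_def Let_def by simp
  then have "sv b (sadd P Q) = snode b (svb 1 b P @ svb 1 b Q) [(LConst 1, length P), (LConst 1, length ?R + length Q)]"
    by (simp only: sv_snoc V)
  also have "\<dots> = sv b P + sv b Q"
    by (simp add: snode_def nth_append sv_nth)
  finally show ?thesis .
qed

lemma swf_sadd: "1 < p \<Longrightarrow> swf p n P \<Longrightarrow> swf p n Q \<Longrightarrow> swf p n (sadd P Q)"
proof -
  assume p: "1 < p" and P: "swf p n P" and Q: "swf p n Q"
  let ?R = "P @ [[(LConst 1, 0)]]"
  have R: "swf p n ?R" using P p by (simp add: swf_snoc labok_def)
  have "swf p n (?R @ shiftP (length ?R) Q)" by (rule swf_shift[OF R Q])
  moreover have "sadd P Q = (?R @ shiftP (length ?R) Q) @ [[(LConst 1, length P), (LConst 1, length ?R + length Q)]]"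
    unfolding sadd_def Let_def by simp
  ultimately show ?thesis using p by (simp only: swf_snoc) (auto simp: labok_def)
qed

lemma ssize_sadd: "ssize (sadd P Q) = ssize P + ssize Q + 5"
  unfolding sadd_def Let_def by (simp only: ssize_append ssize_shiftP ssize_single) simp
lemma ssize_smul: "ssize (smul P Q) = ssize P + ssize Q"
  unfolding smul_def by simp
lemma swf_smul: "swf p n P \<Longrightarrow> swf p n Q \<Longrightarrow> swf p n (smul P Q)"
  unfolding smul_def by (rule swf_shift)


definition scomp :: "nat \<Rightarrow> nat \<Rightarrow> nat \<Rightarrow> (bool list \<Rightarrow> nat) \<Rightarrow> bool" where
  "scomp p n s f \<longleftrightarrow> (\<exists>P. swf p n P \<and> ssize P \<le> s \<and> (\<forall>w. length w = n \<longrightarrow> sv w P mod p = f w mod p))"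

lemma scomp_const: "0 < p \<Longrightarrow> scomp p n 2 (\<lambda>_. c)"
  unfolding scomp_def
  by (rule exI[of _ "[[(LConst (c mod p), 0)]]"])
     (simp add: swf_def labok_def sv_snoc[of _ "[]", simplified] snode_def)

lemma scomp_var: "j < n \<Longrightarrow> scomp p n 2 (\<lambda>w. if w!j then 1 else 0)"
  unfolding scomp_def
  by (rule exI[of _ "[[(LVar j, 0)]]"])
     (simp add: swf_def labok_def sv_snoc[of _ "[]", simplified] snode_def)

lemma scomp_mono: "scomp p n s f \<Longrightarrow> s \<le> s' \<Longrightarrow> scomp p n s' f"
  unfolding scomp_def by (meson order_trans)

lemma scomp_cong: "scomp p n s f \<Longrightarrow> (\<forall>w. length w = n \<longrightarrow> f w mod p = g w mod p) \<Longrightarrow> scomp p n s g"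
  unfolding scomp_def by auto

lemma scomp_add:
  assumes p: "1 < p" and F: "scomp p n s1 f" and G: "scomp p n s2 g"
  shows "scomp p n (s1 + s2 + 5) (\<lambda>w. f w + g w)"
proof -
  obtain P where P: "swf p n P" "ssize P \<le> s1" "\<forall>w. length w = n \<longrightarrow> sv w P mod p = f w mod p"
    using F unfolding scomp_def by blast
  obtain Q where Q: "swf p n Q" "ssize Q \<le> s2" "\<forall>w. length w = n \<longrightarrow> sv w Q mod p = g w mod p"
    using G unfolding scomp_def by blast
  show ?thesis unfolding scomp_def
  proof (intro exI conjI allI impI)
    show "swf p n (sadd P Q)" using swf_sadd[OF p P(1) Q(1)] .
    show "ssize (sadd P Q) \<le> s1 + s2 + 5" using P(2) Q(2) by (simp add: ssize_sadd)
    fix w :: "bool list" assume "length w = n"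
    then show "sv w (sadd P Q) mod p = (f w + g w) mod p"
      using P(3) Q(3) unfolding sv_sadd by (metis mod_add_eq)
  qed
qed

lemma scomp_mul:
  assumes F: "scomp p n s1 f" and G: "scomp p n s2 g"
  shows "scomp p n (s1 + s2) (\<lambda>w. f w * g w)"
proof -
  obtain P where P: "swf p n P" "ssize P \<le> s1" "\<forall>w. length w = n \<longrightarrow> sv w P mod p = f w mod p"
    using F unfolding scomp_def by blast
  obtain Q where Q: "swf p n Q" "ssize Q \<le> s2" "\<forall>w. length w = n \<longrightarrow> sv w Q mod p = g w mod p"
    using G unfolding scomp_def by blast
  show ?thesis unfolding scomp_def
  proof (intro exI conjI allI impI)
    show "swf p n (smul P Q)" using swf_smul[OF P(1) Q(1)] .
    show "ssize (smul P Q) \<le> s1 + s2" using P(2) Q(2) by (simp add: ssize_smul)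
    fix w :: "bool list" assume "length w = n"
    then show "sv w (smul P Q) mod p = (f w * g w) mod p"
      using P(3) Q(3) sv_smul[OF P(1)]
      by (metis mod_mult_eq mult.commute)
  qed
qed

lemma scomp_pow:
  assumes p: "1 < p" and F: "scomp p n s f"
  shows "scomp p n (k * s + 2) (\<lambda>w. f w ^ k)"
proof (induction k)
  case 0
  then show ?case using scomp_const[of p n 1] p by (simp add: numeral_2_eq_2)
next
  case (Suc k)
  have "scomp p n (s + (k * s + 2)) (\<lambda>w. f w * f w ^ k)" by (rule scomp_mul[OF F Suc])
  then show ?case by (simp add: algebra_simps)
qed

lemma scomp_sum:
  assumes p: "1 < p" and I: "finite I" and G: "\<forall>i\<in>I. scomp p n s (g i)"
  shows "scomp p n (card I * (s + 5) + 2) (\<lambda>w. \<Sum>i\<in>I. g i w)"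
  using I G
proof (induction I rule: finite_induct)
  case empty
  then show ?case using scomp_const[of p n 0] p by (simp add: numeral_2_eq_2)
next
  case (insert x F)
  have "scomp p n (s + (card F * (s + 5) + 2) + 5) (\<lambda>w. g x w + (\<Sum>i\<in>F. g i w))"
    by (rule scomp_add[OF p]) (use insert in auto)
  then show ?case using insert by (simp add: algebra_simps)
qed

lemma fermat_mod:
  assumes "prime p" "x mod p \<noteq> 0"
  shows "x ^ (p - 1) mod p = 1"
proof -
  have "\<not> p dvd x" using assms(2) by (simp add: dvd_eq_mod_eq_0)
  then have "[x ^ (p - 1) = 1] (mod p)" by (rule fermat_theorem[OF assms(1)])
  then show ?thesis using prime_gt_1_nat[OF assms(1)] unfolding cong_def by simp
qed

lemma delta_mod:
  assumes p: "prime p" and t: "t < p"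
  shows "(1 + (p - 1) * (x + (p - t)) ^ (p - 1)) mod p = (if x mod p = t then 1 else 0)"
proof -
  have p1: "1 < p" using p prime_gt_1_nat by blast
  show ?thesis
  proof (cases "x mod p = t")
    case True
    have "(x + (p - t)) mod p = (x mod p + (p - t)) mod p" by (simp add: mod_add_left_eq)
    also have "\<dots> = 0" using True t by simp
    finally have "(x + (p - t)) mod p = 0" .
    then have "p dvd (x + (p - t))" by (simp add: dvd_eq_mod_eq_0)
    moreover have "(x + (p - t)) dvd (x + (p - t)) ^ (p - 1)" by (rule dvd_power) (use p1 in simp)
    ultimately have "p dvd (x + (p - t)) ^ (p - 1)" by (rule dvd_trans)
    then have "p dvd (p - 1) * (x + (p - t)) ^ (p - 1)" by (simp add: dvd_mult)
    then have "(1 + (p - 1) * (x + (p - t)) ^ (p - 1)) mod p = 1 mod p"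
      by (metis dvd_eq_mod_eq_0 mod_add_right_eq add_0_right)
    then show ?thesis using True p1 by simp
  next
    case False
    have "(x + (p - t)) mod p \<noteq> 0"
    proof
      assume "(x + (p - t)) mod p = 0"
      then have "(x mod p + (p - t)) mod p = 0" by (simp add: mod_add_left_eq)
      moreover have r: "x mod p < p" using p1 by simp
      ultimately show False
      proof (cases "x mod p + (p - t) < p")
        case True
        then show False using \<open>(x mod p + (p - t)) mod p = 0\<close> t by simp
      next
        case ge: False
        then have "(x mod p + (p - t)) mod p = (x mod p + (p - t) - p) mod p" by (simp add: le_mod_geq)
        also have "x mod p + (p - t) - p = x mod p - t" using ge t by simp
        also have "(x mod p - t) mod p = x mod p - t" using r by simp
        finally have "x mod p - t = 0" using \<open>(x mod p + (p - t)) mod p = 0\<close> by simp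
        then show False using ge t False by simp
      qed
    qed
    then have "(x + (p - t)) ^ (p - 1) mod p = 1" by (rule fermat_mod[OF p])
    then have "(1 + (p - 1) * (x + (p - t)) ^ (p - 1)) mod p = (1 + (p - 1) * 1) mod p"
      by (metis mod_add_right_eq mod_mult_right_eq)
    then show ?thesis using False p1 by simp
  qed
qed

lemma scomp_ind:
  assumes p: "prime p" and F: "scomp p n s f" and T: "T \<subseteq> {..<p}"
  shows "scomp p n (p * (p * (s + 7) + 16) + 2) (\<lambda>w. if f w mod p \<in> T then 1 else 0)"
proof -
  have p1: "1 < p" using p prime_gt_1_nat by blast
  have one: "\<forall>t\<in>T. scomp p n (p * (s + 7) + 11) (\<lambda>w. 1 + (p - 1) * (f w + (p - t)) ^ (p - 1))"
  proof
    fix t assume "t \<in> T"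
    have a: "scomp p n (s + 2 + 5) (\<lambda>w. f w + (p - t))"
      by (rule scomp_add[OF p1 F scomp_const]) (use p1 in simp)
    have b: "scomp p n ((p - 1) * (s + 2 + 5) + 2) (\<lambda>w. (f w + (p - t)) ^ (p - 1))"
      by (rule scomp_pow[OF p1 a])
    have c: "scomp p n (2 + ((p - 1) * (s + 2 + 5) + 2)) (\<lambda>w. (p - 1) * (f w + (p - t)) ^ (p - 1))"
      by (rule scomp_mul[OF scomp_const b]) (use p1 in simp)
    have d: "scomp p n (2 + (2 + ((p - 1) * (s + 2 + 5) + 2)) + 5) (\<lambda>w. 1 + (p - 1) * (f w + (p - t)) ^ (p - 1))"
      by (rule scomp_add[OF p1 scomp_const c]) (use p1 in simp)
    have "2 + (2 + ((p - 1) * (s + 2 + 5) + 2)) + 5 \<le> p * (s + 7) + 11"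
      by (simp add: algebra_simps diff_mult_distrib)
    then show "scomp p n (p * (s + 7) + 11) (\<lambda>w. 1 + (p - 1) * (f w + (p - t)) ^ (p - 1))"
      using scomp_mono[OF d] by blast
  qed
  have fT: "finite T" using T finite_subset by blast
  have cT: "card T \<le> p" using T card_mono[of "{..<p}" T] by simp
  have e: "scomp p n (card T * (p * (s + 7) + 11 + 5) + 2) (\<lambda>w. \<Sum>t\<in>T. 1 + (p - 1) * (f w + (p - t)) ^ (p - 1))"
    by (rule scomp_sum[OF p1 fT one])
  have "card T * (p * (s + 7) + 11 + 5) + 2 \<le> p * (p * (s + 7) + 16) + 2"
    using mult_right_mono[OF cT, of "p * (s + 7) + 16"] by (simp add: mult.commute add.commute)
  then have e': "scomp p n (p * (p * (s + 7) + 16) + 2) (\<lambda>w. \<Sum>t\<in>T. 1 + (p - 1) * (f w + (p - t)) ^ (p - 1))"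
    using scomp_mono[OF e] by blast
  show ?thesis
  proof (rule scomp_cong[OF e'], intro allI impI)
    fix w :: "bool list"
    have "(\<Sum>t\<in>T. 1 + (p - 1) * (f w + (p - t)) ^ (p - 1)) mod p
        = (\<Sum>t\<in>T. (1 + (p - 1) * (f w + (p - t)) ^ (p - 1)) mod p) mod p"
      by (simp add: mod_sum_eq)
    also have "\<dots> = (\<Sum>t\<in>T. (if f w mod p = t then 1 else 0)) mod p"
      using T delta_mod[OF p] by (intro arg_cong[where f="\<lambda>x. x mod p"] sum.cong) auto
    also have "(\<Sum>t\<in>T. (if f w mod p = t then 1 else 0)) = (if f w mod p \<in> T then 1 else 0 :: nat)"
      using fT by (simp add: sum.delta)
    finally show "(\<Sum>t\<in>T. 1 + (p - 1) * (f w + (p - t)) ^ (p - 1)) mod p = (if f w mod p \<in> T then 1 else 0) mod p" .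
  qed
qed


definition elab :: "abp \<Rightarrow> bool list \<Rightarrow> nat \<Rightarrow> nat" where
  "elab G b e = alab_val b (snd (snd (edges G ! e)))"
definition wval :: "abp \<Rightarrow> bool list \<Rightarrow> nat list \<Rightarrow> nat" where
  "wval G b es = prod_list (map (elab G b) es)"
definition Wsum :: "abp \<Rightarrow> bool list \<Rightarrow> nat \<Rightarrow> nat" where
  "Wsum G b u = (\<Sum>es\<in>{es. abp_walk G u es}. wval G b es)"

lemma abp_value_Wsum: "abp_value p G b = Wsum G b 0 mod p"
  unfolding abp_value_def Wsum_def abp_paths_def wval_def elab_def by simp

lemma wf_edge: "wf_abp p n G \<Longrightarrow> i < length (edges G) \<Longrightarrow>
   fst (edges G ! i) < fst (snd (edges G ! i)) \<and> fst (snd (edges G ! i)) < nv G"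
  unfolding wf_abp_def by (metis (mono_tags, lifting) case_prodD nth_mem prod.collapse)

lemma walk_len: "wf_abp p n G \<Longrightarrow> abp_walk G u es \<Longrightarrow> u + length es \<le> nv G - 1"
proof (induction es arbitrary: u)
  case Nil then show ?case by simp
next
  case (Cons e es)
  then have e: "e < length (edges G)" "fst (edges G ! e) = u" "abp_walk G (fst (snd (edges G ! e))) es" by auto
  have "fst (snd (edges G ! e)) + length es \<le> nv G - 1" using Cons.IH[OF Cons.prems(1) e(3)] .
  moreover have "u < fst (snd (edges G ! e))" using wf_edge[OF Cons.prems(1) e(1)] e(2) by simp
  ultimately show ?case by simp
qed

lemma walk_set: "abp_walk G u es \<Longrightarrow> set es \<subseteq> {..<length (edges G)}"
  by (induction es arbitrary: u) auto

lemma finite_walks: "wf_abp p n G \<Longrightarrow> finite {es. abp_walk G u es}"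
proof -
  assume wf: "wf_abp p n G"
  have "{es. abp_walk G u es} \<subseteq> {es. set es \<subseteq> {..<length (edges G)} \<and> length es \<le> nv G}"
    using walk_len[OF wf] walk_set by fastforce
  moreover have "finite {es. set es \<subseteq> {..<length (edges G)} \<and> length es \<le> nv G}"
    by (rule finite_lists_length_le) simp
  ultimately show ?thesis by (rule finite_subset)
qed

lemma walks_split:
  "{es. abp_walk G u es} = (if u = nv G - 1 then {[]} else {}) \<union>
     (\<lambda>(i,es). i # es) ` (SIGMA i:{i. i < length (edges G) \<and> fst (edges G ! i) = u}. {es. abp_walk G (fst (snd (edges G ! i))) es})"
proof (rule equalityI; rule subsetI)
  fix x assume "x \<in> {es. abp_walk G u es}"
  then show "x \<in> (if u = nv G - 1 then {[]} else {}) \<union>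
     (\<lambda>(i,es). i # es) ` (SIGMA i:{i. i < length (edges G) \<and> fst (edges G ! i) = u}. {es. abp_walk G (fst (snd (edges G ! i))) es})"
  proof (cases x)
    case Nil then show ?thesis using \<open>x \<in> _\<close> by simp
  next
    case (Cons a xs)
    then have "(a, xs) \<in> (SIGMA i:{i. i < length (edges G) \<and> fst (edges G ! i) = u}. {es. abp_walk G (fst (snd (edges G ! i))) es})"
      using \<open>x \<in> _\<close> by simp
    then show ?thesis unfolding Cons by (intro UnI2 rev_image_eqI[of "(a, xs)"]) auto
  qed
next
  fix x assume "x \<in> (if u = nv G - 1 then {[]} else {}) \<union>
     (\<lambda>(i,es). i # es) ` (SIGMA i:{i. i < length (edges G) \<and> fst (edges G ! i) = u}. {es. abp_walk G (fst (snd (edges G ! i))) es})"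
  then show "x \<in> {es. abp_walk G u es}" by (auto split: if_splits)
qed

lemma Wsum_rec:
  assumes wf: "wf_abp p n G"
  shows "Wsum G b u = (if u = nv G - 1 then 1 else 0) +
     (\<Sum>i<length (edges G). if fst (edges G ! i) = u then elab G b i * Wsum G b (fst (snd (edges G ! i))) else 0)"
proof -
  let ?I = "{i. i < length (edges G) \<and> fst (edges G ! i) = u}"
  let ?S = "SIGMA i:?I. {es. abp_walk G (fst (snd (edges G ! i))) es}"
  let ?A = "(if u = nv G - 1 then {[]} else {}) :: nat list set"
  let ?C = "(\<lambda>(i,es). i # es) ` ?S"
  have fI: "finite ?I" by simp
  have fS: "finite ?S" using fI finite_walks[OF wf] by (intro finite_SigmaI) auto
  have "Wsum G b u = sum (wval G b) (?A \<union> ?C)"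
    unfolding Wsum_def walks_split[of G u] ..
  also have "\<dots> = sum (wval G b) ?A + sum (wval G b) ?C"
    by (rule sum.union_disjoint) (use fS in auto)
  also have "sum (wval G b) ?A = (if u = nv G - 1 then 1 else 0)"
    by (simp add: wval_def)
  also have "sum (wval G b) ?C = sum (wval G b \<circ> (\<lambda>(i,es). i # es)) ?S"
    by (rule sum.reindex) (auto simp: inj_on_def)
  also have "\<dots> = (\<Sum>(i,es)\<in>?S. elab G b i * wval G b es)"
    by (rule sum.cong) (auto simp: wval_def)
  also have "\<dots> = (\<Sum>i\<in>?I. \<Sum>es\<in>{es. abp_walk G (fst (snd (edges G ! i))) es}. elab G b i * wval G b es)"
    by (rule sum.Sigma[symmetric]) (use fI finite_walks[OF wf] in auto)
  also have "\<dots> = (\<Sum>i\<in>?I. elab G b i * Wsum G b (fst (snd (edges G ! i))))"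
    by (simp add: Wsum_def sum_distrib_left)
  also have "\<dots> = (\<Sum>i<length (edges G). if fst (edges G ! i) = u then elab G b i * Wsum G b (fst (snd (edges G ! i))) else 0)"
  proof -
    have "?I = {i \<in> {..<length (edges G)}. fst (edges G ! i) = u}" by auto
    then show ?thesis using sum.inter_filter[of "{..<length (edges G)}" "\<lambda>i. elab G b i * Wsum G b (fst (snd (edges G ! i)))" "\<lambda>i. fst (edges G ! i) = u"]
      by simp
  qed
  finally show ?thesis .
qed

lemma Wsum_rec_list:
  assumes wf: "wf_abp p n G"
  shows "Wsum G b u = (if u = nv G - 1 then 1 else 0) +
     sum_list (map (\<lambda>(x,v,l). if x = u then alab_val b l * Wsum G b v else 0) (edges G))"
proof -
  let ?g = "\<lambda>(x,v,l). if x = u then alab_val b l * Wsum G b v else 0"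
  have "sum_list (map ?g (edges G)) = (\<Sum>i = 0..<length (edges G). map ?g (edges G) ! i)"
    using sum_list_sum_nth[of "map ?g (edges G)"] by simp
  also have "\<dots> = (\<Sum>i<length (edges G). if fst (edges G ! i) = u then elab G b i * Wsum G b (fst (snd (edges G ! i))) else 0)"
    by (rule sum.cong) (auto simp: elab_def atLeast0LessThan split: prod.splits)
  finally show ?thesis using Wsum_rec[OF wf, of b u] by simp
qed

lemma sum_list_map_concat: "sum_list (map g (concat X)) = sum_list (map (\<lambda>x. sum_list (map g x)) X)"
  by (induction X) auto

lemma svb_Suc:
  assumes wf: "swf p n P" and k: "k < length P"
  shows "svb \<beta> b P ! Suc k = snode b (svb \<beta> b P) (P ! k)"
proof -
  have P: "P = (take k P @ [P ! k]) @ drop (Suc k) P"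
    using k by (simp add: Cons_nth_drop_Suc)
  have "svb \<beta> b P ! Suc k = svb \<beta> b (take k P @ [P ! k]) ! Suc k"
    using svb_prefix[of "Suc k" "take k P @ [P ! k]" \<beta> b "drop (Suc k) P"] P k by simp
  also have "\<dots> = snode b (svb \<beta> b (take k P)) (P ! k)"
    using k by (simp add: nth_append)
  also have "\<dots> = snode b (svb \<beta> b P) (P ! k)"
  proof (rule snode_cong, safe)
    fix l j assume "(l, j) \<in> set (P ! k)"
    then have "j \<le> k" using wf k unfolding swf_def by fastforce
    then show "svb \<beta> b (take k P) ! j = svb \<beta> b P ! j"
      using svb_prefix[of j "take k P" \<beta> b "drop k P"] k by simp
  qed
  finally show ?thesis .
qed


definition s2g :: "sprog \<Rightarrow> abp" where
  "s2g P = \<lparr>nv = Suc (length P),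
      edges = concat (map (\<lambda>k. map (\<lambda>(l,j). (length P - Suc k, length P - j, l)) (P!k)) [0..<length P])\<rparr>"

lemma s2g_edge:
  assumes "(u,v,l) \<in> set (edges (s2g P))"
  obtains k j where "k < length P" "(l, j) \<in> set (P!k)" "u = length P - Suc k" "v = length P - j"
  using assms unfolding s2g_def by auto

lemma wf_s2g: "swf p n P \<Longrightarrow> wf_abp p n (s2g P)"
proof -
  assume wf: "swf p n P"
  have "u < v \<and> v < nv (s2g P) \<and> labok p n l" if uvl: "(u,v,l) \<in> set (edges (s2g P))" for u v l
  proof -
    obtain k j where kj: "k < length P" "(l, j) \<in> set (P!k)" "u = length P - Suc k" "v = length P - j"
      using s2g_edge[OF uvl] by blast
    have "j \<le> k" "labok p n l" using wf kj(1,2) unfolding swf_def by fastforce+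
    then show ?thesis using kj by (simp add: s2g_def diff_less_mono2)
  qed
  note H = this[unfolded labok_def]
  have "nv (s2g P) \<ge> 1" by (simp add: s2g_def)
  then show ?thesis unfolding wf_abp_def using H by (simp add: case_prod_beta) (metis prod.collapse)
qed

lemma map_upt_nth: "map (\<lambda>k. f (P ! k)) [0..<length P] = map f P"
  by (rule nth_equalityI) auto

lemma size_s2g: "abp_size (s2g P) = Suc (ssize P)"
  unfolding abp_size_def s2g_def ssize_def
  by (simp add: length_concat comp_def map_upt_nth)


lemma Wsum_s2g:
  assumes wf: "swf p n P" and i: "i \<le> length P"
  shows "Wsum (s2g P) b (length P - i) = svb 1 b P ! i"
  using i
proof (induction i rule: less_induct)
  case (less i)
  let ?L = "length P"
  let ?g = "\<lambda>(x,v,l). if x = ?L - i then alab_val b l * Wsum (s2g P) b v else 0"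
  have wfg: "wf_abp p n (s2g P)" by (rule wf_s2g[OF wf])
  have E: "edges (s2g P) = concat (map (\<lambda>k. map (\<lambda>(l,j). (?L - Suc k, ?L - j, l)) (P!k)) [0..<?L])"
    by (simp add: s2g_def)
  have "sum_list (map ?g (edges (s2g P)))
      = sum_list (map (\<lambda>k. sum_list (map ?g (map (\<lambda>(l,j). (?L - Suc k, ?L - j, l)) (P!k)))) [0..<?L])"
    unfolding E sum_list_map_concat by (simp only: map_map comp_def)
  also have "\<dots> = (\<Sum>k\<in>{0..<?L}. if Suc k = i then sum_list (map (\<lambda>(l,j). alab_val b l * Wsum (s2g P) b (?L - j)) (P!k)) else 0)"
    unfolding interv_sum_list_conv_sum_set_nat set_upt
  proof (rule sum.cong[OF refl])
    fix k assume "k \<in> {0..<?L}"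
    then have k: "k < ?L" by simp
    have eq: "(?L - Suc k = ?L - i) = (Suc k = i)" using k less.prems by auto
    show "sum_list (map ?g (map (\<lambda>(l,j). (?L - Suc k, ?L - j, l)) (P!k)))
       = (if Suc k = i then sum_list (map (\<lambda>(l,j). alab_val b l * Wsum (s2g P) b (?L - j)) (P!k)) else 0)"
      using eq by (auto simp: comp_def split_def)
  qed
  finally have S: "sum_list (map ?g (edges (s2g P))) = (\<Sum>k\<in>{0..<?L}. if Suc k = i then sum_list (map (\<lambda>(l,j). alab_val b l * Wsum (s2g P) b (?L - j)) (P!k)) else 0)" .
  have R: "Wsum (s2g P) b (?L - i) = (if ?L - i = ?L then 1 else 0) + sum_list (map ?g (edges (s2g P)))"
    using Wsum_rec_list[OF wfg, of b "?L - i"] by (simp add: s2g_def)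
  show ?case
  proof (cases i)
    case 0
    then have "sum_list (map ?g (edges (s2g P))) = 0" using S by simp
    then show ?thesis using R 0 by (simp add: svb_0)
  next
    case (Suc k)
    then have k: "k < ?L" using less.prems by simp
    have "sum_list (map ?g (edges (s2g P))) = sum_list (map (\<lambda>(l,j). alab_val b l * Wsum (s2g P) b (?L - j)) (P!k))"
      using S k Suc by (simp add: sum.delta)
    also have "\<dots> = snode b (svb 1 b P) (P ! k)"
      unfolding snode_def
    proof (rule arg_cong[where f=sum_list], rule map_cong[OF refl], clarify)
      fix l j assume "(l, j) \<in> set (P ! k)"
      then have "j \<le> k" using wf k unfolding swf_def by fastforce
      then show "alab_val b l * Wsum (s2g P) b (?L - j) = alab_val b l * svb 1 b P ! j"
        using less.IH[of j] Suc k by simp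
    qed
    also have "\<dots> = svb 1 b P ! i" using svb_Suc[OF wf k] Suc by simp
    finally show ?thesis using R Suc less.prems by simp
  qed
qed

lemma sv_s2g: "swf p n P \<Longrightarrow> abp_value p (s2g P) b = sv b P mod p"
  using Wsum_s2g[of p n P "length P" b] by (simp add: abp_value_Wsum sv_nth)

definition g2s :: "abp \<Rightarrow> sprog" where
  "g2s G = map (\<lambda>i. map (\<lambda>(u,v,l). (l, nv G - 1 - v)) (filter (\<lambda>e. fst e = nv G - 2 - i) (edges G))) [0..<nv G - 1]"

lemma length_g2s[simp]: "length (g2s G) = nv G - 1"
  by (simp add: g2s_def)

lemma g2s_nth: "k < nv G - 1 \<Longrightarrow> g2s G ! k = map (\<lambda>(u,v,l). (l, nv G - 1 - v)) (filter (\<lambda>e. fst e = nv G - 2 - k) (edges G))"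
  by (simp add: g2s_def)

lemma wf_edge_mem: "wf_abp p n G \<Longrightarrow> (u,v,l) \<in> set (edges G) \<Longrightarrow> u < v \<and> v < nv G \<and> labok p n l"
  unfolding wf_abp_def labok_def by fastforce

lemma swf_g2s: "wf_abp p n G \<Longrightarrow> swf p n (g2s G)"
  unfolding swf_def
proof (intro allI impI ballI)
  fix k x assume wf: "wf_abp p n G" and k: "k < length (g2s G)" and x: "x \<in> set (g2s G ! k)"
  obtain l j where x': "x = (l, j)" by (cases x)
  from x k obtain u v where uv: "(u, v, l) \<in> set (edges G)" "u = nv G - 2 - k" "j = nv G - 1 - v"
    by (auto simp: g2s_nth x')
  have "u < v \<and> v < nv G \<and> labok p n l" by (rule wf_edge_mem[OF wf uv(1)])
  then show "case x of (l, j) \<Rightarrow> j \<le> k \<and> labok p n l" using uv k x' by auto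
qed

lemma sum_list_zero: "(\<forall>x\<in>set xs. f x = (0::nat)) \<Longrightarrow> sum_list (map f xs) = 0"
  by (induction xs) auto

lemma ssize_g2s: "ssize (g2s G) \<le> abp_size G * abp_size G"
proof -
  have "sum_list (map length (g2s G)) \<le> sum_list (map (\<lambda>_. length (edges G)) (g2s G))"
  proof (rule sum_list_mono)
    fix x assume "x \<in> set (g2s G)"
    then obtain k where "k < nv G - 1" "x = g2s G ! k" by (metis in_set_conv_nth length_g2s)
    then show "length x \<le> length (edges G)" by (simp add: g2s_nth)
  qed
  also have "\<dots> = (nv G - 1) * length (edges G)" by (simp add: sum_list_triv)
  finally have "ssize (g2s G) \<le> (nv G - 1) + (nv G - 1) * length (edges G)"
    unfolding ssize_def by simp
  also have "\<dots> \<le> nv G * nv G + nv G * length (edges G)"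
  proof (rule add_mono)
    show "nv G - 1 \<le> nv G * nv G" by (cases "nv G") auto
    show "(nv G - 1) * length (edges G) \<le> nv G * length (edges G)" by simp
  qed
  also have "\<dots> \<le> abp_size G * abp_size G"
    unfolding abp_size_def by (simp add: algebra_simps)
  finally show ?thesis .
qed

lemma Wsum_g2s:
  assumes wf: "wf_abp p n G" and i: "i < nv G"
  shows "svb 1 b (g2s G) ! i = Wsum G b (nv G - 1 - i)"
  using i
proof (induction i rule: less_induct)
  case (less i)
  let ?N = "nv G"
  have swf: "swf p n (g2s G)" by (rule swf_g2s[OF wf])
  show ?case
  proof (cases i)
    case 0
    have "sum_list (map (\<lambda>(x,v,l). if x = ?N - 1 then alab_val b l * Wsum G b v else 0) (edges G)) = 0"
      by (rule sum_list_zero) (use wf_edge_mem[OF wf] in fastforce)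
    then show ?thesis using 0 Wsum_rec_list[OF wf, of b "?N - 1"] by (simp add: svb_0)
  next
    case (Suc k)
    then have k: "k < ?N - 1" using less.prems by simp
    let ?F = "filter (\<lambda>e. fst e = ?N - 2 - k) (edges G)"
    have "svb 1 b (g2s G) ! i = snode b (svb 1 b (g2s G)) (g2s G ! k)"
      using svb_Suc[OF swf] k Suc by simp
    also have "\<dots> = sum_list (map (\<lambda>(u,v,l). alab_val b l * svb 1 b (g2s G) ! (?N - 1 - v)) ?F)"
      unfolding g2s_nth[OF k] snode_def by (simp add: comp_def split_def)
    also have "\<dots> = sum_list (map (\<lambda>(u,v,l). alab_val b l * Wsum G b v) ?F)"
    proof (rule arg_cong[where f=sum_list], rule map_cong[OF refl], clarify)
      fix u v l assume "(u, v, l) \<in> set ?F"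
      then have uv: "u = ?N - 2 - k" "u < v" "v < ?N" using wf_edge_mem[OF wf] by auto
      then have "?N - 1 - v < i" using Suc k by simp
      then have "svb 1 b (g2s G) ! (?N - 1 - v) = Wsum G b (?N - 1 - (?N - 1 - v))"
        using less.IH less.prems by simp
      also have "?N - 1 - (?N - 1 - v) = v" using uv by simp
      finally show "alab_val b l * svb 1 b (g2s G) ! (?N - 1 - v) = alab_val b l * Wsum G b v" by simp
    qed
    also have "\<dots> = sum_list (map (\<lambda>(x,v,l). if x = ?N - 2 - k then alab_val b l * Wsum G b v else 0) (edges G))"
      unfolding sum_list_map_filter' by (rule arg_cong[where f=sum_list], rule map_cong[OF refl]) auto
    also have "\<dots> = Wsum G b (?N - 1 - i)"
      using Wsum_rec_list[OF wf, of b "?N - 1 - i"] Suc k by simp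
    finally show ?thesis .
  qed
qed

lemma sv_g2s: "wf_abp p n G \<Longrightarrow> abp_value p G b = sv b (g2s G) mod p"
  using Wsum_g2s[of p n G "nv G - 1" b] unfolding wf_abp_def
  by (simp add: abp_value_Wsum sv_nth)


lemma cvals_Nil[simp]: "circuit_vals A [] x = []"
  by (simp add: circuit_vals_def)
lemma cvals_snoc[simp]: "circuit_vals A (c @ [nd]) x = circuit_vals A c x @ [cnode_val A x (circuit_vals A c x) nd]"
  by (simp add: circuit_vals_def)
lemma cvals_single[simp]: "circuit_vals A [nd] x = [cnode_val A x [] nd]"
  by (simp add: circuit_vals_def)
lemma length_cvals[simp]: "length (circuit_vals A c x) = length c"
  by (induction c rule: rev_induct) auto
lemma cvals_prefix: "k < length c \<Longrightarrow> circuit_vals A (c @ d) x ! k = circuit_vals A c x ! k"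
proof (induction d rule: rev_induct)
  case Nil then show ?case by simp
next
  case (snoc y ys)
  then show ?case by (simp add: nth_append flip: append_assoc)
qed
lemma cvals_last: "circuit_vals A (c @ [nd]) x ! length c = cnode_val A x (circuit_vals A c x) nd"
  by (simp add: nth_append)
lemma circuit_eval_nth: "c \<noteq> [] \<Longrightarrow> circuit_eval A c x = circuit_vals A c x ! (length c - 1)"
proof -
  assume "c \<noteq> []"
  then have "circuit_vals A c x \<noteq> []" by (metis length_0_conv length_cvals)
  then show ?thesis unfolding circuit_eval_def by (simp add: last_conv_nth)
qed

definition cwf :: "alg \<Rightarrow> nat \<Rightarrow> cnode list \<Rightarrow> bool" where
  "cwf A n c \<longleftrightarrow> (\<forall>k < length c. wf_cnode A n k (c ! k))"
lemma cwf_Nil[simp]: "cwf A n []" by (simp add: cwf_def)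
lemma cwf_snoc: "cwf A n (c @ [nd]) \<longleftrightarrow> cwf A n c \<and> wf_cnode A n (length c) nd"
  unfolding cwf_def by (auto simp: nth_append less_Suc_eq)
lemma circuit_cwf: "circuit A n c \<longleftrightarrow> c \<noteq> [] \<and> cwf A n c"
  unfolding circuit_def cwf_def by simp
lemma csize_append[simp]: "circuit_size (c @ d) = circuit_size c + circuit_size d"
  unfolding circuit_size_def by simp
lemma csize_single[simp]: "circuit_size [nd] = Suc (cnode_edges nd)"
  unfolding circuit_size_def by simp

definition iota0 :: "nat \<Rightarrow> bool \<Rightarrow> nat" where
  "iota0 p b = enc p (if b then 1 else 0) 0"

definition labnode :: "nat \<Rightarrow> alab \<Rightarrow> cnode" where
  "labnode p l = (case l of LVar i \<Rightarrow> CInp i | LConst a \<Rightarrow> CConst (enc p a 0))"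

lemma labnode_val:
  assumes p: "1 < p" and "labok p n l" and "length w = n"
  shows "cnode_val (Aalg p) (map (iota0 p) w) vs (labnode p l) = enc p (alab_val w l) 0"
  using assms by (cases l) (auto simp: labnode_def labok_def iota0_def)

lemma labnode_wf:
  assumes p: "1 < p" and "labok p n l"
  shows "wf_cnode (Aalg p) n k (labnode p l)"
  using assms by (cases l) (auto simp: labnode_def labok_def enc_lt)

lemma alab_val_lt: "1 < p \<Longrightarrow> labok p n l \<Longrightarrow> alab_val w l < p"
  by (cases l) (auto simp: labok_def)

lemma block:
  assumes p: "1 < p" and cw: "cwf (Aalg p) n c"
    and idx: "\<forall>i \<le> length P. idx i < length c"
    and val: "\<forall>w. length w = n \<longrightarrow> (\<forall>i \<le> length P. circuit_vals (Aalg p) c (map (iota0 p) w) ! idx i = enc p 0 (svb 1 w P ! i mod p))"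
    and ts: "\<forall>(l,j)\<in>set ts. j \<le> length P \<and> labok p n l"
  shows "\<exists>d. d \<noteq> [] \<and> cwf (Aalg p) n (c @ d) \<and> circuit_size d \<le> 1 + 5 * length ts \<and>
     (\<forall>w. length w = n \<longrightarrow> circuit_vals (Aalg p) (c @ d) (map (iota0 p) w) ! (length c + length d - 1)
          = enc p 0 (snode w (svb 1 w P) ts mod p))"
  using ts
proof (induction ts rule: rev_induct)
  case Nil
  show ?case
    by (rule exI[of _ "[CConst (enc p 0 0)]"]) (use p cw in \<open>simp add: cwf_snoc enc_lt nth_append\<close>)
next
  case (snoc t ts)
  obtain l j where t: "t = (l, j)" by (cases t)
  have lj: "j \<le> length P" "labok p n l" using snoc.prems t by auto
  obtain d where d: "d \<noteq> []" "cwf (Aalg p) n (c @ d)" "circuit_size d \<le> 1 + 5 * length ts"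
     "\<forall>w. length w = n \<longrightarrow> circuit_vals (Aalg p) (c @ d) (map (iota0 p) w) ! (length c + length d - 1)
          = enc p 0 (snode w (svb 1 w P) ts mod p)"
    using snoc by auto
  let ?B = "length c + length d - 1"
  let ?d = "d @ [labnode p l, CGate 1 [?B + 1, idx j, ?B]]"
  have B: "?B < length (c @ d)" using d(1) by (cases d) auto
  show ?case
  proof (intro exI conjI allI impI)
    show "?d \<noteq> []" by simp
    have "cwf (Aalg p) n ((c @ d) @ [labnode p l])"
      using d(2) labnode_wf[OF p lj(2)] cwf_snoc[of "Aalg p" n "c @ d" "labnode p l"] by blast
    moreover have "wf_cnode (Aalg p) n (length ((c @ d) @ [labnode p l])) (CGate 1 [?B + 1, idx j, ?B])"
      using idx lj(1) B by (auto simp: A_arity)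
    moreover have eq: "c @ ?d = ((c @ d) @ [labnode p l]) @ [CGate 1 [?B + 1, idx j, ?B]]" by simp
    ultimately show "cwf (Aalg p) n (c @ ?d)"
      using cwf_snoc[of "Aalg p" n "(c @ d) @ [labnode p l]" "CGate 1 [?B + 1, idx j, ?B]"] by metis
    show "circuit_size ?d \<le> 1 + 5 * length (ts @ [t])"
      using d(3) by (cases l) (simp_all add: labnode_def circuit_size_def)
    fix w :: "bool list" assume w: "length w = n"
    let ?x = "map (iota0 p) w"
    let ?V = "circuit_vals (Aalg p) ((c @ d) @ [labnode p l]) ?x"
    have V1: "?V ! (?B + 1) = enc p (alab_val w l) 0"
    proof -
      have e: "?B + 1 = length (c @ d)" using d(1) by (cases d) auto
      show ?thesis unfolding e cvals_last by (rule labnode_val[OF p lj(2) w])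
    qed
    have V2: "?V ! idx j = enc p 0 (svb 1 w P ! j mod p)"
      using val w lj(1) idx cvals_prefix[where k="idx j" and c=c and d="d @ [labnode p l]" and A="Aalg p" and x="?x"]
      by (simp add: nth_append)
    have V3: "?V ! ?B = enc p 0 (snode w (svb 1 w P) ts mod p)"
      using d(4) w B cvals_prefix[where k="?B" and c="c @ d" and d="[labnode p l]" and A="Aalg p" and x="?x"] by simp
    have eq: "c @ ?d = ((c @ d) @ [labnode p l]) @ [CGate 1 [?B + 1, idx j, ?B]]" by simp
    have e2: "length c + length ?d - 1 = length ((c @ d) @ [labnode p l])" by simp
    have "circuit_vals (Aalg p) (c @ ?d) ?x ! (length c + length ?d - 1)
        = maop p [?V ! (?B + 1), ?V ! idx j, ?V ! ?B]"
      unfolding eq e2 cvals_last by simp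
    also have "\<dots> = enc p 0 ((snode w (svb 1 w P) ts mod p + alab_val w l * (svb 1 w P ! j mod p)) mod p)"
      unfolding maop_def nth_Cons_0 nth_Cons_Suc V1 V2 V3 using p alab_val_lt[OF p lj(2)] by simp
    also have "(snode w (svb 1 w P) ts mod p + alab_val w l * (svb 1 w P ! j mod p)) mod p
        = snode w (svb 1 w P) (ts @ [t]) mod p"
      unfolding t snode_append by (simp add: snode_def mod_add_left_eq) (metis mod_add_right_eq mod_mult_right_eq)
    finally show "circuit_vals (Aalg p) (c @ ?d) ?x ! (length c + length ?d - 1) = enc p 0 (snode w (svb 1 w P) (ts @ [t]) mod p)" .
  qed
qed

lemma s2c:
  assumes p: "1 < p" and wf: "swf p n P"
  shows "\<exists>c idx. c \<noteq> [] \<and> cwf (Aalg p) n c \<and> circuit_size c \<le> 5 * ssize P + 1 \<and>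
    (\<forall>i \<le> length P. idx i < length c) \<and> idx (length P) = length c - 1 \<and>
    (\<forall>w. length w = n \<longrightarrow> (\<forall>i \<le> length P. circuit_vals (Aalg p) c (map (iota0 p) w) ! idx i = enc p 0 (svb 1 w P ! i mod p)))"
  using wf
proof (induction P rule: rev_induct)
  case Nil
  show ?case
    by (rule exI[of _ "[CConst (enc p 0 1)]"], rule exI[of _ "\<lambda>_. 0"])
       (use p in \<open>simp add: cwf_def enc_lt\<close>)
next
  case (snoc ts P)
  have wfP: "swf p n P" and tsw: "\<forall>(l,j)\<in>set ts. j \<le> length P \<and> labok p n l"
    using snoc.prems swf_snoc by blast+
  obtain c idx where c: "c \<noteq> []" "cwf (Aalg p) n c" "circuit_size c \<le> 5 * ssize P + 1"
    "\<forall>i \<le> length P. idx i < length c" "idx (length P) = length c - 1"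
    "\<forall>w. length w = n \<longrightarrow> (\<forall>i \<le> length P. circuit_vals (Aalg p) c (map (iota0 p) w) ! idx i = enc p 0 (svb 1 w P ! i mod p))"
    using snoc.IH[OF wfP] by blast
  obtain d where d: "d \<noteq> []" "cwf (Aalg p) n (c @ d)" "circuit_size d \<le> 1 + 5 * length ts"
     "\<forall>w. length w = n \<longrightarrow> circuit_vals (Aalg p) (c @ d) (map (iota0 p) w) ! (length c + length d - 1)
          = enc p 0 (snode w (svb 1 w P) ts mod p)"
    using block[OF p c(2) c(4) c(6) tsw] by blast
  let ?idx = "idx(Suc (length P) := length c + length d - 1)"
  show ?case
  proof (rule exI[of _ "c @ d"], rule exI[of _ ?idx], intro conjI allI impI)
    show "c @ d \<noteq> []" using c by simp
    show "cwf (Aalg p) n (c @ d)" by (rule d(2))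
    show "circuit_size (c @ d) \<le> 5 * ssize (P @ [ts]) + 1" using c(3) d(3) by simp
    show "?idx (length (P @ [ts])) = length (c @ d) - 1" by simp
    fix i assume i: "i \<le> length (P @ [ts])"
    show "?idx i < length (c @ d)"
    proof (cases "i = Suc (length P)")
      case True then show ?thesis using d(1) by (cases d) auto
    next
      case False then have "i \<le> length P" using i by simp
      then show ?thesis using c(4) False by fastforce
    qed
  next
    fix w :: "bool list" and i assume w: "length w = n" and i: "i \<le> length (P @ [ts])"
    show "circuit_vals (Aalg p) (c @ d) (map (iota0 p) w) ! ?idx i = enc p 0 (svb 1 w (P @ [ts]) ! i mod p)"
    proof (cases "i = Suc (length P)")
      case True
      then show ?thesis using d(4) w by (simp add: nth_append)
    next
      case False
      then have i': "i \<le> length P" using i by simp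
      then have "circuit_vals (Aalg p) (c @ d) (map (iota0 p) w) ! idx i = circuit_vals (Aalg p) c (map (iota0 p) w) ! idx i"
        using c(4) cvals_prefix by blast
      moreover have "svb 1 w (P @ [ts]) ! i = svb 1 w P ! i" using svb_prefix[OF i'] .
      ultimately show ?thesis using c(6) w i' False by simp
    qed
  qed
qed

lemma scomp_circ:
  assumes p: "1 < p" and F: "scomp p n s f"
  shows "\<exists>c. circuit (Aalg p) n c \<and> circuit_size c \<le> 5 * s + 1 \<and>
     (\<forall>w. length w = n \<longrightarrow> circuit_eval (Aalg p) c (map (iota0 p) w) = enc p 0 (f w mod p))"
proof -
  obtain P where P: "swf p n P" "ssize P \<le> s" "\<forall>w. length w = n \<longrightarrow> sv w P mod p = f w mod p"
    using F unfolding scomp_def by blast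
  obtain c idx where c: "c \<noteq> []" "cwf (Aalg p) n c" "circuit_size c \<le> 5 * ssize P + 1"
    "idx (length P) = length c - 1"
    "\<forall>w. length w = n \<longrightarrow> (\<forall>i \<le> length P. circuit_vals (Aalg p) c (map (iota0 p) w) ! idx i = enc p 0 (svb 1 w P ! i mod p))"
    using s2c[OF p P(1)] by blast
  show ?thesis
  proof (intro exI conjI allI impI)
    show "circuit (Aalg p) n c" using c by (simp add: circuit_cwf)
    show "circuit_size c \<le> 5 * s + 1" using c(3) P(2) by simp
    fix w :: "bool list" assume w: "length w = n"
    have "circuit_eval (Aalg p) c (map (iota0 p) w) = circuit_vals (Aalg p) c (map (iota0 p) w) ! idx (length P)"
      using circuit_eval_nth[OF c(1)] c(4) by simp
    also have "\<dots> = enc p 0 (sv w P mod p)" using c(5) w by (simp add: sv_nth)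
    finally show "circuit_eval (Aalg p) c (map (iota0 p) w) = enc p 0 (f w mod p)" using P(3) w by simp
  qed
qed


lemma size_bound1:
  fixes s c X :: nat
  assumes s: "s \<le> c * X" and X: "1 \<le> X"
  shows "5 * (p * (p * (s * s + 7) + 16) + 2) + 1 \<le> (5 * (p * p * c * c + 7 * p * p + 16 * p + 2) + 1) * (X * X)"
proof -
  have XX: "1 \<le> X * X" using X by (simp add: one_le_mult_iff)
  have ss: "s * s \<le> c * c * (X * X)" using mult_le_mono[OF s s] by (simp add: algebra_simps)
  have "p * (p * (s * s + 7) + 16) + 2 = p * p * (s * s) + (7 * p * p + 16 * p + 2)"
    by (simp add: algebra_simps)
  also have "\<dots> \<le> p * p * (c * c * (X * X)) + (7 * p * p + 16 * p + 2) * (X * X)"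
  proof (rule add_mono)
    show "p * p * (s * s) \<le> p * p * (c * c * (X * X))" using ss by (rule mult_left_mono) simp
    show "7 * p * p + 16 * p + 2 \<le> (7 * p * p + 16 * p + 2) * (X * X)"
      using mult_le_mono2[OF XX, of "7 * p * p + 16 * p + 2"] by simp
  qed
  finally have A: "p * (p * (s * s + 7) + 16) + 2 \<le> (p * p * c * c + 7 * p * p + 16 * p + 2) * (X * X)"
    by (simp add: algebra_simps)
  have "5 * (p * (p * (s * s + 7) + 16) + 2) + 1 \<le> 5 * ((p * p * c * c + 7 * p * p + 16 * p + 2) * (X * X)) + X * X"
    using add_mono[OF mult_le_mono2[OF A, of 5] XX] by simp
  also have "\<dots> = (5 * (p * p * c * c + 7 * p * p + 16 * p + 2) + 1) * (X * X)"
    by (simp add: algebra_simps)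
  finally show ?thesis .
qed

lemma nuDet_sub:
  assumes p: "prime p"
  shows "nuDet p \<subseteq> nuP (Aalg p)"
proof
  fix L assume L: "L \<in> nuDet p"
  obtain c k where H: "\<forall>n. \<exists>G T. wf_abp p n G \<and> abp_size G \<le> c * (n + 1) ^ k \<and> T \<subseteq> {0..<p} \<and>
      (\<forall>w. length w = n \<longrightarrow> (w \<in> L \<longleftrightarrow> abp_value p G w \<in> T))"
    using L unfolding nuDet_def mem_Collect_eq by (elim exE) (rule that)
  have p1: "1 < p" using p prime_gt_1_nat by blast
  let ?C = "5 * (p * p * c * c + 7 * p * p + 16 * p + 2) + 1"
  have "\<forall>n. \<exists>circ. circuit (Aalg p) n circ \<and> circuit_size circ \<le> ?C * (n + 1) ^ (2 * k) \<and>
      (\<forall>w. length w = n \<longrightarrow> (w \<in> L \<longleftrightarrow> circuit_eval (Aalg p) circ (map (iota0 p) w) = enc p 0 1))"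
  proof
    fix n
    obtain G T where G: "wf_abp p n G" "abp_size G \<le> c * (n + 1) ^ k" "T \<subseteq> {0..<p}"
      "\<forall>w. length w = n \<longrightarrow> (w \<in> L \<longleftrightarrow> abp_value p G w \<in> T)"
      using H[THEN spec, of n] by (elim exE conjE) (rule that)
    let ?s = "abp_size G"
    have sc: "scomp p n (?s * ?s) (\<lambda>w. sv w (g2s G))"
      unfolding scomp_def using swf_g2s[OF G(1)] ssize_g2s[of G] by blast
    have T: "T \<subseteq> {..<p}" using G(3) by auto
    have ind: "scomp p n (p * (p * (?s * ?s + 7) + 16) + 2) (\<lambda>w. if sv w (g2s G) mod p \<in> T then 1 else 0)"
      by (rule scomp_ind[OF p sc T])
    obtain circ where circ: "circuit (Aalg p) n circ"
      "circuit_size circ \<le> 5 * (p * (p * (?s * ?s + 7) + 16) + 2) + 1"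
      "\<forall>w. length w = n \<longrightarrow> circuit_eval (Aalg p) circ (map (iota0 p) w) = enc p 0 ((if sv w (g2s G) mod p \<in> T then 1 else 0) mod p)"
      using scomp_circ[OF p1 ind] by blast
    have X: "1 \<le> (n + 1) ^ k" by simp
    have "circuit_size circ \<le> ?C * ((n + 1) ^ k * (n + 1) ^ k)"
      using circ(2) size_bound1[OF G(2) X, of p] by (rule le_trans)
    also have "(n + 1) ^ k * (n + 1) ^ k = (n + 1) ^ (2 * k)" by (metis mult_2 power_add)
    finally have sz: "circuit_size circ \<le> ?C * (n + 1) ^ (2 * k)" .
    show "\<exists>circ. circuit (Aalg p) n circ \<and> circuit_size circ \<le> ?C * (n + 1) ^ (2 * k) \<and>
      (\<forall>w. length w = n \<longrightarrow> (w \<in> L \<longleftrightarrow> circuit_eval (Aalg p) circ (map (iota0 p) w) = enc p 0 1))"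
    proof (intro exI conjI allI impI)
      show "circuit (Aalg p) n circ" by (rule circ(1))
      show "circuit_size circ \<le> ?C * (n + 1) ^ (2 * k)" by (rule sz)
      fix w :: "bool list" assume w: "length w = n"
      have av: "abp_value p G w = sv w (g2s G) mod p" by (rule sv_g2s[OF G(1)])
      have e01: "enc p 0 0 \<noteq> enc p 0 1" using p1 enc_inj[of 0 p 0 0 1] by simp
      show "w \<in> L \<longleftrightarrow> circuit_eval (Aalg p) circ (map (iota0 p) w) = enc p 0 1"
        using G(4) w circ(3) av p1 e01 by (cases "sv w (g2s G) mod p \<in> T") simp_all
    qed
  qed
  from choice[OF this] obtain t where t: "\<forall>n. circuit (Aalg p) n (t n) \<and> circuit_size (t n) \<le> ?C * (n + 1) ^ (2 * k) \<and>
      (\<forall>w. length w = n \<longrightarrow> (w \<in> L \<longleftrightarrow> circuit_eval (Aalg p) (t n) (map (iota0 p) w) = enc p 0 1))"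
    by blast
  show "L \<in> nuP (Aalg p)"
    unfolding nuP_def
  proof (intro CollectI exI conjI)
    show "\<forall>n. circuit (Aalg p) n (t n) \<and> circuit_size (t n) \<le> ?C * (n + 1) ^ (2 * k)" using t by blast
    show "iota0 p True \<in> univ (Aalg p)" "iota0 p False \<in> univ (Aalg p)"
      using p1 by (simp_all add: iota0_def enc_lt)
    show "{enc p 0 1} \<subseteq> univ (Aalg p)" using p1 by (simp add: enc_lt)
    show "L = {w. nudfa_accepts (Aalg p) t (iota0 p) {enc p 0 1} w}"
    proof (rule Set.set_eqI)
      fix w :: "bool list"
      show "w \<in> L \<longleftrightarrow> w \<in> {w. nudfa_accepts (Aalg p) t (iota0 p) {enc p 0 1} w}"
        unfolding nudfa_accepts_def using t by simp
    qed
  qed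
qed


definition affv :: "bool list \<Rightarrow> nat \<times> (nat \<Rightarrow> nat) \<Rightarrow> nat" where
  "affv w a = fst a + (\<Sum>j<length w. snd a j * (if w!j then 1 else 0))"

lemma mod3: "((x::int) mod m - y mod m + z mod m) mod m = (x - y + z) mod m"
proof -
  have "(x mod m - y mod m + z mod m) mod m = ((x mod m - y mod m) mod m + z mod m) mod m"
    by (simp add: mod_add_left_eq)
  also have "(x mod m - y mod m) mod m = (x - y) mod m" by (rule mod_diff_eq)
  also have "((x - y) mod m + z mod m) mod m = (x - y + z) mod m" by (rule mod_add_eq)
  finally show ?thesis .
qed

lemma md_comb:
  assumes p: "0 < p"
  shows "md p (int (A mod p) - int (B mod p) + int (C mod p)) = (A + (p - 1) * B + C) mod p"
proof -
  have "int (md p (int (A mod p) - int (B mod p) + int (C mod p))) = (int A - int B + int C) mod int p"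
    unfolding int_md[OF p] of_nat_mod by (rule mod3)
  also have "(int A - int B + int C) mod int p = (int A - int B + int C + int p * int B) mod int p"
    by simp
  also have "int A - int B + int C + int p * int B = int (A + (p - 1) * B + C)"
  proof -
    have "(p - 1) * B + B = p * B" using p by (cases p) auto
    then have "int ((p - 1) * B) + int B = int p * int B" by (metis of_nat_add of_nat_mult)
    then show ?thesis by simp
  qed
  also have "int (A + (p - 1) * B + C) mod int p = int ((A + (p - 1) * B + C) mod p)"
    by (simp add: of_nat_mod)
  finally show ?thesis by simp
qed

lemma affv_comb: "affv w (fst a + (p - 1) * fst b + fst c, \<lambda>m. snd a m + (p - 1) * snd b m + snd c m)
   = affv w a + (p - 1) * affv w b + affv w c"
  unfolding affv_def by (simp add: algebra_simps sum.distrib sum_distrib_left)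

lemma sum_delta_mult: "j < (n::nat) \<Longrightarrow> (\<Sum>m<n. (if m = j then C else 0) * (g m :: nat)) = C * g j"
proof (induction n)
  case 0 then show ?case by simp
next
  case (Suc n)
  show ?case
  proof (cases "j < n")
    case True then show ?thesis using Suc by simp
  next
    case False
    then have "j = n" using Suc.prems by simp
    moreover have "(\<Sum>m<n. (if m = j then C else 0) * g m) = 0" using \<open>j = n\<close> by simp
    ultimately show ?thesis by simp
  qed
qed

lemma svb_vars:
  assumes iv: "iv \<le> length P" and j: "j < m"
  shows "svb 1 b (P @ map (\<lambda>j. [(LVar j, iv)]) [0..<m]) ! (length P + 1 + j) = (if b!j then 1 else 0) * svb 1 b P ! iv"
  using j
proof (induction m)
  case 0 then show ?case by simp
next
  case (Suc m)
  have eq: "P @ map (\<lambda>j. [(LVar j, iv)]) [0..<Suc m] = (P @ map (\<lambda>j. [(LVar j, iv)]) [0..<m]) @ [[(LVar m, iv)]]"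
    by simp
  show ?case
  proof (cases "j < m")
    case True
    then have "length P + 1 + j \<le> length (P @ map (\<lambda>j. [(LVar j, iv)]) [0..<m])" by simp
    then show ?thesis unfolding eq using svb_prefix Suc.IH[OF True] by metis
  next
    case False
    then have jm: "j = m" using Suc.prems by simp
    have "svb 1 b ((P @ map (\<lambda>j. [(LVar j, iv)]) [0..<m]) @ [[(LVar m, iv)]]) ! (length P + 1 + j)
       = snode b (svb 1 b (P @ map (\<lambda>j. [(LVar j, iv)]) [0..<m])) [(LVar m, iv)]"
      using jm svb_last_snoc[of 1 b "P @ map (\<lambda>j. [(LVar j, iv)]) [0..<m]" "[(LVar m, iv)]"] by simp
    also have "\<dots> = (if b!j then 1 else 0) * svb 1 b P ! iv"
      using svb_prefix[OF iv, of 1 b "map (\<lambda>j. [(LVar j, iv)]) [0..<m]"] jm by (simp add: snode_def)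
    finally show ?thesis unfolding eq .
  qed
qed

lemma swf_vars:
  assumes "swf p n P" "iv \<le> length P" "m \<le> n"
  shows "swf p n (P @ map (\<lambda>j. [(LVar j, iv)]) [0..<m])"
  using assms(3)
proof (induction m)
  case 0 then show ?case using assms by simp
next
  case (Suc m)
  have eq: "P @ map (\<lambda>j. [(LVar j, iv)]) [0..<Suc m] = (P @ map (\<lambda>j. [(LVar j, iv)]) [0..<m]) @ [[(LVar m, iv)]]"
    by simp
  show ?case unfolding eq swf_snoc using Suc assms(2) by (auto simp: labok_def)
qed

definition c2s_inv :: "nat \<Rightarrow> nat \<Rightarrow> (bool \<Rightarrow> nat) \<Rightarrow> cnode list \<Rightarrow> sprog \<Rightarrow> (nat \<Rightarrow> nat) \<Rightarrow> (nat \<Rightarrow> nat \<times> (nat \<Rightarrow> nat)) \<Rightarrow> bool" where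
  "c2s_inv p n \<iota> c P idx aff \<longleftrightarrow> swf p n P \<and> (\<forall>k<length c. idx k \<le> length P) \<and>
   (\<forall>w. length w = n \<longrightarrow> (\<forall>k<length c. circuit_vals (Aalg p) c (map \<iota> w) ! k < p * p \<and>
       d1 p (circuit_vals (Aalg p) c (map \<iota> w) ! k) = affv w (aff k) mod p \<and>
       d2 p (circuit_vals (Aalg p) c (map \<iota> w) ! k) = svb 1 w P ! idx k mod p))"

lemma c2s_ext:
  assumes inv: "c2s_inv p n \<iota> c P idx aff"
    and wfQ: "swf p n (P @ Q)" and jq: "jn \<le> length (P @ Q)"
    and new: "\<forall>w. length w = n \<longrightarrow> cnode_val (Aalg p) (map \<iota> w) (circuit_vals (Aalg p) c (map \<iota> w)) nd < p * p \<and>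
       d1 p (cnode_val (Aalg p) (map \<iota> w) (circuit_vals (Aalg p) c (map \<iota> w)) nd) = affv w a mod p \<and>
       d2 p (cnode_val (Aalg p) (map \<iota> w) (circuit_vals (Aalg p) c (map \<iota> w)) nd) = svb 1 w (P @ Q) ! jn mod p"
  shows "c2s_inv p n \<iota> (c @ [nd]) (P @ Q) (idx(length c := jn)) (aff(length c := a))"
proof -
  have A: "\<forall>k<length (c @ [nd]). (idx(length c := jn)) k \<le> length (P @ Q)"
  proof (intro allI impI)
    fix k assume k: "k < length (c @ [nd])"
    show "(idx(length c := jn)) k \<le> length (P @ Q)"
      using inv k jq unfolding c2s_inv_def by (cases "k = length c") (auto simp: less_Suc_eq)
  qed
  have B: "\<forall>w. length w = n \<longrightarrow> (\<forall>k<length (c @ [nd]).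
      circuit_vals (Aalg p) (c @ [nd]) (map \<iota> w) ! k < p * p \<and>
      d1 p (circuit_vals (Aalg p) (c @ [nd]) (map \<iota> w) ! k) = affv w ((aff(length c := a)) k) mod p \<and>
      d2 p (circuit_vals (Aalg p) (c @ [nd]) (map \<iota> w) ! k) = svb 1 w (P @ Q) ! (idx(length c := jn)) k mod p)"
  proof (intro allI impI)
    fix w :: "bool list" and k assume w: "length w = n" and k: "k < length (c @ [nd])"
    let ?V = "circuit_vals (Aalg p) (c @ [nd]) (map \<iota> w)"
    show "?V ! k < p * p \<and> d1 p (?V ! k) = affv w ((aff(length c := a)) k) mod p \<and>
        d2 p (?V ! k) = svb 1 w (P @ Q) ! (idx(length c := jn)) k mod p"
    proof (cases "k = length c")
      case True
      then show ?thesis using new w by (simp add: nth_append)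
    next
      case False
      then have k': "k < length c" using k by simp
      have "?V ! k = circuit_vals (Aalg p) c (map \<iota> w) ! k" using cvals_prefix[OF k'] by blast
      moreover have "idx k \<le> length P" using inv k' unfolding c2s_inv_def by blast
      ultimately show ?thesis using inv w k' False svb_prefix[of "idx k" P 1 w Q] unfolding c2s_inv_def by simp
    qed
  qed
  show ?thesis unfolding c2s_inv_def using wfQ A B by blast
qed

lemma c2s_inv_Nil: "c2s_inv p n \<iota> [] [] idx aff"
  unfolding c2s_inv_def by simp

lemma sel_mod:
  assumes "F < (p::nat)" "T < p"
  shows "(F + (T + (p - 1) * F) * (if b then 1 else 0)) mod p = (if b then T else F)"
proof (cases b)
  case True
  have "(p - 1) * F + F = p * F" using assms by (cases p) auto
  then have e: "F + (T + (p - 1) * F) = T + p * F" by simp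
  have "(F + (T + (p - 1) * F) * (if b then 1 else 0)) mod p = (T + p * F) mod p"
    using True by (simp only: if_True mult_1_right e)
  also have "\<dots> = T" using assms by simp
  finally show ?thesis using True by simp
next
  case False then show ?thesis using assms by simp
qed

lemma step_inp:
  assumes p: "1 < p" and io: "\<forall>b. \<iota> b < p * p" and inv: "c2s_inv p n \<iota> c P idx aff" and i: "i < n"
  shows "c2s_inv p n \<iota> (c @ [CInp i])
    (P @ [[(LVar i, 0)], [(LConst (d2 p (\<iota> False)), 0), (LConst ((d2 p (\<iota> True) + (p - 1) * d2 p (\<iota> False)) mod p), Suc (length P))]])
    (idx(length c := length P + 2))
    (aff(length c := (d1 p (\<iota> False), \<lambda>m. if m = i then d1 p (\<iota> True) + (p - 1) * d1 p (\<iota> False) else 0)))"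
proof -
  have p0: "0 < p" using p by simp
  let ?t1 = "[(LVar i, 0)]"
  let ?t2 = "[(LConst (d2 p (\<iota> False)), 0), (LConst ((d2 p (\<iota> True) + (p - 1) * d2 p (\<iota> False)) mod p), Suc (length P))]"
  have eqQ: "P @ [?t1, ?t2] = (P @ [?t1]) @ [?t2]" by simp
  have wfP: "swf p n P" using inv unfolding c2s_inv_def by blast
  show ?thesis
  proof (rule c2s_ext[OF inv])
    show "swf p n (P @ [?t1, ?t2])" unfolding eqQ swf_snoc
      using wfP i p0 d2_lt[OF p0] by (auto simp: labok_def)
    show "length P + 2 \<le> length (P @ [?t1, ?t2])" by simp
    show "\<forall>w. length w = n \<longrightarrow> cnode_val (Aalg p) (map \<iota> w) (circuit_vals (Aalg p) c (map \<iota> w)) (CInp i) < p * p \<and>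
       d1 p (cnode_val (Aalg p) (map \<iota> w) (circuit_vals (Aalg p) c (map \<iota> w)) (CInp i)) =
         affv w (d1 p (\<iota> False), \<lambda>m. if m = i then d1 p (\<iota> True) + (p - 1) * d1 p (\<iota> False) else 0) mod p \<and>
       d2 p (cnode_val (Aalg p) (map \<iota> w) (circuit_vals (Aalg p) c (map \<iota> w)) (CInp i)) =
         svb 1 w (P @ [?t1, ?t2]) ! (length P + 2) mod p"
    proof (intro allI impI conjI)
      fix w :: "bool list" assume w: "length w = n"
      have cv: "cnode_val (Aalg p) (map \<iota> w) (circuit_vals (Aalg p) c (map \<iota> w)) (CInp i) = \<iota> (w ! i)"
        using w i by simp
      show "cnode_val (Aalg p) (map \<iota> w) (circuit_vals (Aalg p) c (map \<iota> w)) (CInp i) < p * p"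
        using cv io by simp
      have "affv w (d1 p (\<iota> False), \<lambda>m. if m = i then d1 p (\<iota> True) + (p - 1) * d1 p (\<iota> False) else 0)
          = d1 p (\<iota> False) + (d1 p (\<iota> True) + (p - 1) * d1 p (\<iota> False)) * (if w ! i then 1 else 0)"
        unfolding affv_def using sum_delta_mult[of i n] w i by simp
      then show "d1 p (cnode_val (Aalg p) (map \<iota> w) (circuit_vals (Aalg p) c (map \<iota> w)) (CInp i)) =
         affv w (d1 p (\<iota> False), \<lambda>m. if m = i then d1 p (\<iota> True) + (p - 1) * d1 p (\<iota> False) else 0) mod p"
        using sel_mod[OF d1_lt[OF p0] d1_lt[OF p0], of "\<iota> False" "\<iota> True" "w ! i"] cv by (cases "w ! i") auto
      have s1: "svb 1 w (P @ [?t1]) ! Suc (length P) = (if w ! i then 1 else 0)"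
        using svb_last_snoc[of 1 w P ?t1] by (simp add: snode_def svb_0)
      have "svb 1 w (P @ [?t1, ?t2]) ! (length P + 2) = snode w (svb 1 w (P @ [?t1])) ?t2"
        unfolding eqQ using svb_last_snoc[of 1 w "P @ [?t1]" ?t2] by simp
      also have "\<dots> = d2 p (\<iota> False) + ((d2 p (\<iota> True) + (p - 1) * d2 p (\<iota> False)) mod p) * (if w ! i then 1 else 0)"
        using s1 by (simp add: snode_def svb_0 nth_append)
      finally have "svb 1 w (P @ [?t1, ?t2]) ! (length P + 2) mod p
          = (d2 p (\<iota> False) + (d2 p (\<iota> True) + (p - 1) * d2 p (\<iota> False)) * (if w ! i then 1 else 0)) mod p"
        by (metis mod_add_right_eq mod_mult_left_eq)
      also have "\<dots> = (if w ! i then d2 p (\<iota> True) else d2 p (\<iota> False))"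
        by (rule sel_mod[OF d2_lt[OF p0] d2_lt[OF p0]])
      finally show "d2 p (cnode_val (Aalg p) (map \<iota> w) (circuit_vals (Aalg p) c (map \<iota> w)) (CInp i)) =
         svb 1 w (P @ [?t1, ?t2]) ! (length P + 2) mod p"
        using cv by (cases "w ! i") auto
    qed
  qed
qed

lemma inv_get:
  assumes "c2s_inv p n \<iota> c P idx aff" "length w = n" "k < length c"
  shows "circuit_vals (Aalg p) c (map \<iota> w) ! k < p * p"
    "d1 p (circuit_vals (Aalg p) c (map \<iota> w) ! k) = affv w (aff k) mod p"
    "d2 p (circuit_vals (Aalg p) c (map \<iota> w) ! k) = svb 1 w P ! idx k mod p"
    "idx k \<le> length P"
  using assms unfolding c2s_inv_def by blast+

lemma inv_swf: "c2s_inv p n \<iota> c P idx aff \<Longrightarrow> swf p n P"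
  unfolding c2s_inv_def by blast

lemma step_const:
  assumes p: "1 < p" and inv: "c2s_inv p n \<iota> c P idx aff" and a0: "a0 < p * p"
  shows "c2s_inv p n \<iota> (c @ [CConst a0]) (P @ [[(LConst (d2 p a0), 0)]])
    (idx(length c := length P + 1)) (aff(length c := (d1 p a0, \<lambda>_. 0)))"
proof (rule c2s_ext[OF inv])
  have p0: "0 < p" using p by simp
  show "swf p n (P @ [[(LConst (d2 p a0), 0)]])" using inv_swf[OF inv] d2_lt[OF p0]
    by (simp add: swf_snoc labok_def)
  show "length P + 1 \<le> length (P @ [[(LConst (d2 p a0), 0)]])" by simp
  show "\<forall>w. length w = n \<longrightarrow> cnode_val (Aalg p) (map \<iota> w) (circuit_vals (Aalg p) c (map \<iota> w)) (CConst a0) < p * p \<and>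
       d1 p (cnode_val (Aalg p) (map \<iota> w) (circuit_vals (Aalg p) c (map \<iota> w)) (CConst a0)) = affv w (d1 p a0, \<lambda>_. 0) mod p \<and>
       d2 p (cnode_val (Aalg p) (map \<iota> w) (circuit_vals (Aalg p) c (map \<iota> w)) (CConst a0)) = svb 1 w (P @ [[(LConst (d2 p a0), 0)]]) ! (length P + 1) mod p"
    using a0 d1_lt[OF p0] d2_lt[OF p0]
    by (simp add: affv_def snode_def svb_0 nth_append)
qed

lemma inv_idx: "c2s_inv p n \<iota> c P idx aff \<Longrightarrow> k < length c \<Longrightarrow> idx k \<le> length P"
  unfolding c2s_inv_def by blast

lemma step_m:
  assumes p: "1 < p" and inv: "c2s_inv p n \<iota> c P idx aff"
    and u: "u < length c" and v: "v < length c" and x: "x < length c"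
  shows "c2s_inv p n \<iota> (c @ [CGate 0 [u, v, x]])
    (P @ [[(LConst 1, idx u), (LConst (p - 1), idx v), (LConst 1, idx x)]])
    (idx(length c := length P + 1))
    (aff(length c := (fst (aff u) + (p - 1) * fst (aff v) + fst (aff x),
        \<lambda>m. snd (aff u) m + (p - 1) * snd (aff v) m + snd (aff x) m)))"
proof (rule c2s_ext[OF inv])
  have p0: "0 < p" using p by simp
  let ?Q = "[[(LConst 1, idx u), (LConst (p - 1), idx v), (LConst 1, idx x)]]"
  have iu: "idx u \<le> length P" and iv: "idx v \<le> length P" and ix: "idx x \<le> length P"
    using inv_idx[OF inv] u v x by auto
  show "swf p n (P @ ?Q)" using inv_swf[OF inv] p iu iv ix
    by (auto simp: swf_snoc labok_def)
  show "length P + 1 \<le> length (P @ ?Q)" by simp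
  show "\<forall>w. length w = n \<longrightarrow> cnode_val (Aalg p) (map \<iota> w) (circuit_vals (Aalg p) c (map \<iota> w)) (CGate 0 [u, v, x]) < p * p \<and>
       d1 p (cnode_val (Aalg p) (map \<iota> w) (circuit_vals (Aalg p) c (map \<iota> w)) (CGate 0 [u, v, x])) =
         affv w (fst (aff u) + (p - 1) * fst (aff v) + fst (aff x), \<lambda>m. snd (aff u) m + (p - 1) * snd (aff v) m + snd (aff x) m) mod p \<and>
       d2 p (cnode_val (Aalg p) (map \<iota> w) (circuit_vals (Aalg p) c (map \<iota> w)) (CGate 0 [u, v, x])) = svb 1 w (P @ ?Q) ! (length P + 1) mod p"
  proof (intro allI impI conjI)
    fix w :: "bool list" assume w: "length w = n"
    let ?V = "circuit_vals (Aalg p) c (map \<iota> w)"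
    have cv: "cnode_val (Aalg p) (map \<iota> w) ?V (CGate 0 [u, v, x]) = mop p [?V ! u, ?V ! v, ?V ! x]"
      by simp
    show "cnode_val (Aalg p) (map \<iota> w) ?V (CGate 0 [u, v, x]) < p * p" using cv mop_lt[OF p0] by simp
    have "d1 p (mop p [?V ! u, ?V ! v, ?V ! x]) = md p (int (affv w (aff u) mod p) - int (affv w (aff v) mod p) + int (affv w (aff x) mod p))"
      using d1_mop[OF p0] inv_get(2)[OF inv w u] inv_get(2)[OF inv w v] inv_get(2)[OF inv w x] by simp
    also have "\<dots> = (affv w (aff u) + (p - 1) * affv w (aff v) + affv w (aff x)) mod p" by (rule md_comb[OF p0])
    finally show "d1 p (cnode_val (Aalg p) (map \<iota> w) ?V (CGate 0 [u, v, x])) =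
         affv w (fst (aff u) + (p - 1) * fst (aff v) + fst (aff x), \<lambda>m. snd (aff u) m + (p - 1) * snd (aff v) m + snd (aff x) m) mod p"
      using cv affv_comb[of w "aff u" p "aff v" "aff x"] by simp
    have su: "svb 1 w (P @ ?Q) ! idx u = svb 1 w P ! idx u" by (rule svb_prefix[OF iu])
    have sv': "svb 1 w (P @ ?Q) ! idx v = svb 1 w P ! idx v" by (rule svb_prefix[OF iv])
    have sx: "svb 1 w (P @ ?Q) ! idx x = svb 1 w P ! idx x" by (rule svb_prefix[OF ix])
    have "svb 1 w (P @ ?Q) ! (length P + 1) = svb 1 w P ! idx u + (p - 1) * svb 1 w P ! idx v + svb 1 w P ! idx x"
      using svb_last_snoc[of 1 w P "[(LConst 1, idx u), (LConst (p - 1), idx v), (LConst 1, idx x)]"]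
      by (simp add: snode_def)
    moreover have "d2 p (mop p [?V ! u, ?V ! v, ?V ! x]) = md p (int (svb 1 w P ! idx u mod p) - int (svb 1 w P ! idx v mod p) + int (svb 1 w P ! idx x mod p))"
      using d2_mop[OF p0] inv_get(3)[OF inv w u] inv_get(3)[OF inv w v] inv_get(3)[OF inv w x] by simp
    ultimately show "d2 p (cnode_val (Aalg p) (map \<iota> w) ?V (CGate 0 [u, v, x])) = svb 1 w (P @ ?Q) ! (length P + 1) mod p"
      using cv md_comb[OF p0] by simp
  qed
qed

lemma snode_map_upt: "snode b vs (map (\<lambda>j. (LConst (g j), h j)) [0..<m]) = (\<Sum>j<m. g j * vs ! (h j))"
  unfolding snode_def by (simp add: comp_def interv_sum_list_conv_sum_set_nat atLeast0LessThan)

lemma sum_mod_coef: "(\<Sum>j\<in>A. (f j mod p) * g j) mod p = (\<Sum>j\<in>A. f j * (g j :: nat)) mod p"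
proof -
  have "(\<Sum>j\<in>A. (f j mod p) * g j) mod p = (\<Sum>j\<in>A. (f j mod p) * g j mod p) mod p"
    by (simp add: mod_sum_eq)
  also have "\<dots> = (\<Sum>j\<in>A. f j * g j mod p) mod p"
    by (simp add: mod_mult_left_eq)
  also have "\<dots> = (\<Sum>j\<in>A. f j * g j) mod p" by (simp add: mod_sum_eq)
  finally show ?thesis .
qed

lemma step_ma:
  assumes p: "1 < p" and inv: "c2s_inv p n \<iota> c P idx aff"
    and u: "u < length c" and v: "v < length c" and x: "x < length c"
  shows "c2s_inv p n \<iota> (c @ [CGate 1 [u, v, x]])
    (P @ (map (\<lambda>j. [(LVar j, idx v)]) [0..<n] @
       [[(LConst 1, idx x), (LConst (fst (aff u) mod p), idx v)] @ map (\<lambda>j. (LConst (snd (aff u) j mod p), length P + 1 + j)) [0..<n]]))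
    (idx(length c := length P + n + 1))
    (aff(length c := aff x))"
proof -
  have p0: "0 < p" using p by simp
  let ?Qv = "map (\<lambda>j. [(LVar j, idx v)]) [0..<n]"
  let ?fin = "[(LConst 1, idx x), (LConst (fst (aff u) mod p), idx v)] @ map (\<lambda>j. (LConst (snd (aff u) j mod p), length P + 1 + j)) [0..<n]"
  have eqQ: "P @ (?Qv @ [?fin]) = (P @ ?Qv) @ [?fin]" by simp
  have iu: "idx u \<le> length P" and iv: "idx v \<le> length P" and ix: "idx x \<le> length P"
    using inv_idx[OF inv] u v x by auto
  have wfv: "swf p n (P @ ?Qv)" by (rule swf_vars[OF inv_swf[OF inv] iv]) simp
  show ?thesis
  proof (rule c2s_ext[OF inv])
    show "swf p n (P @ (?Qv @ [?fin]))" unfolding eqQ swf_snoc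
      using wfv iu iv ix p by (auto simp: labok_def)
    show "length P + n + 1 \<le> length (P @ (?Qv @ [?fin]))" by simp
    show "\<forall>w. length w = n \<longrightarrow> cnode_val (Aalg p) (map \<iota> w) (circuit_vals (Aalg p) c (map \<iota> w)) (CGate 1 [u, v, x]) < p * p \<and>
       d1 p (cnode_val (Aalg p) (map \<iota> w) (circuit_vals (Aalg p) c (map \<iota> w)) (CGate 1 [u, v, x])) = affv w (aff x) mod p \<and>
       d2 p (cnode_val (Aalg p) (map \<iota> w) (circuit_vals (Aalg p) c (map \<iota> w)) (CGate 1 [u, v, x])) = svb 1 w (P @ (?Qv @ [?fin])) ! (length P + n + 1) mod p"
    proof (intro allI impI conjI)
      fix w :: "bool list" assume w: "length w = n"
      let ?V = "circuit_vals (Aalg p) c (map \<iota> w)"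
      let ?Su = "svb 1 w P ! idx u" let ?Sv = "svb 1 w P ! idx v" let ?Sx = "svb 1 w P ! idx x"
      have cv: "cnode_val (Aalg p) (map \<iota> w) ?V (CGate 1 [u, v, x]) = maop p [?V ! u, ?V ! v, ?V ! x]"
        by simp
      show "cnode_val (Aalg p) (map \<iota> w) ?V (CGate 1 [u, v, x]) < p * p" using cv maop_lt[OF p0] by simp
      show "d1 p (cnode_val (Aalg p) (map \<iota> w) ?V (CGate 1 [u, v, x])) = affv w (aff x) mod p"
        using cv d1_maop[OF p0] inv_get(2)[OF inv w x] by simp
      have "d2 p (cnode_val (Aalg p) (map \<iota> w) ?V (CGate 1 [u, v, x]))
          = (?Sx mod p + (affv w (aff u) mod p) * (?Sv mod p)) mod p"
        using cv d2_maop[OF p0] inv_get(2)[OF inv w u] inv_get(3)[OF inv w v] inv_get(3)[OF inv w x] by simp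
      also have "\<dots> = (?Sx + affv w (aff u) * ?Sv) mod p"
        by (rule mod_add_cong) (simp_all add: mod_mult_eq)
      finally have L: "d2 p (cnode_val (Aalg p) (map \<iota> w) ?V (CGate 1 [u, v, x])) = (?Sx + affv w (aff u) * ?Sv) mod p" .
      have bv: "\<forall>j<n. svb 1 w (P @ ?Qv) ! (length P + 1 + j) = (if w!j then 1 else 0) * ?Sv"
        using svb_vars[OF iv] by blast
      have "svb 1 w (P @ (?Qv @ [?fin])) ! (length P + n + 1) = snode w (svb 1 w (P @ ?Qv)) ?fin"
        unfolding eqQ using svb_last_snoc[of 1 w "P @ ?Qv" ?fin] by simp
      also have "\<dots> = svb 1 w (P @ ?Qv) ! idx x + (fst (aff u) mod p) * svb 1 w (P @ ?Qv) ! idx v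
          + (\<Sum>j<n. (snd (aff u) j mod p) * svb 1 w (P @ ?Qv) ! (length P + 1 + j))"
      proof -
        have M: "snode w (svb 1 w (P @ ?Qv)) (map (\<lambda>j. (LConst (snd (aff u) j mod p), length P + 1 + j)) [0..<n])
          = (\<Sum>j<n. (snd (aff u) j mod p) * svb 1 w (P @ ?Qv) ! (length P + 1 + j))" by (rule snode_map_upt)
        show ?thesis unfolding snode_append M by (simp add: snode_def)
      qed
      also have "\<dots> = ?Sx + (fst (aff u) mod p) * ?Sv + (\<Sum>j<n. (snd (aff u) j mod p) * ((if w!j then 1 else 0) * ?Sv))"
        using svb_prefix[OF ix, of 1 w ?Qv] svb_prefix[OF iv, of 1 w ?Qv] bv by simp
      finally have R: "svb 1 w (P @ (?Qv @ [?fin])) ! (length P + n + 1) =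
          ?Sx + (fst (aff u) mod p) * ?Sv + (\<Sum>j<n. (snd (aff u) j mod p) * ((if w!j then 1 else 0) * ?Sv))" .
      have "(?Sx + (fst (aff u) mod p) * ?Sv + (\<Sum>j<n. (snd (aff u) j mod p) * ((if w!j then 1 else 0) * ?Sv))) mod p
          = (?Sx + fst (aff u) * ?Sv + (\<Sum>j<n. snd (aff u) j * ((if w!j then 1 else 0) * ?Sv))) mod p"
      proof (rule mod_add_cong)
        show "(?Sx + (fst (aff u) mod p) * ?Sv) mod p = (?Sx + fst (aff u) * ?Sv) mod p"
          by (rule mod_add_cong) (simp_all add: mod_mult_left_eq)
        show "(\<Sum>j<n. (snd (aff u) j mod p) * ((if w!j then 1 else 0) * ?Sv)) mod p
          = (\<Sum>j<n. snd (aff u) j * ((if w!j then 1 else 0) * ?Sv)) mod p"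
          by (rule sum_mod_coef)
      qed
      also have "?Sx + fst (aff u) * ?Sv + (\<Sum>j<n. snd (aff u) j * ((if w!j then 1 else 0) * ?Sv))
          = ?Sx + affv w (aff u) * ?Sv"
        unfolding affv_def using w by (simp add: algebra_simps sum_distrib_right sum_distrib_left)
      finally show "d2 p (cnode_val (Aalg p) (map \<iota> w) ?V (CGate 1 [u, v, x])) = svb 1 w (P @ (?Qv @ [?fin])) ! (length P + n + 1) mod p"
        using L R by simp
    qed
  qed
qed

lemma ssize_Cons[simp]: "ssize (ts # P) = Suc (length ts) + ssize P"
  unfolding ssize_def by simp

lemma ssize_map_single[simp]: "ssize (map (\<lambda>j. [g j]) xs) = 2 * length xs"
  by (induction xs) auto

lemma c2s:
  assumes p: "1 < p" and io: "\<forall>b. \<iota> b < p * p" and cw: "cwf (Aalg p) n c"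
  shows "\<exists>P idx aff. c2s_inv p n \<iota> c P idx aff \<and> ssize P \<le> (3 * n + 5) * length c"
  using cw
proof (induction c rule: rev_induct)
  case Nil
  show ?case using c2s_inv_Nil by fastforce
next
  case (snoc nd c)
  have cwc: "cwf (Aalg p) n c" and wnd: "wf_cnode (Aalg p) n (length c) nd"
    using snoc.prems cwf_snoc by blast+
  obtain P idx aff where inv: "c2s_inv p n \<iota> c P idx aff" and sz: "ssize P \<le> (3 * n + 5) * length c"
    using snoc.IH[OF cwc] by blast
  show ?case
  proof (cases nd)
    case (CInp i)
    then have i: "i < n" using wnd by simp
    show ?thesis unfolding CInp
      by (intro exI conjI, rule step_inp[OF p io inv i]) (use sz in simp)
  next
    case (CConst a0)
    then have a0: "a0 < p * p" using wnd by simp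
    show ?thesis unfolding CConst
      by (intro exI conjI, rule step_const[OF p inv a0]) (use sz in simp)
  next
    case (CGate f args)
    then have f: "f < 2" and la: "length args = 3" and ar: "\<forall>i\<in>set args. i < length c"
      using wnd by (auto simp: A_arity)
    obtain u v x where args: "args = [u, v, x]"
    proof -
      have "args = [args!0, args!1, args!2]" using la
        by (intro nth_equalityI) (auto simp: numeral_3_eq_3 numeral_2_eq_2 less_Suc_eq nth_Cons')
      then show ?thesis by (rule that)
    qed
    have u: "u < length c" and v: "v < length c" and x: "x < length c" using ar args by auto
    show ?thesis
    proof (cases "f = 0")
      case True
      show ?thesis unfolding CGate args True
        by (intro exI conjI, rule step_m[OF p inv u v x]) (use sz in simp)
    next
      case False
      then have f1: "f = 1" using f by simp
      show ?thesis unfolding CGate args f1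
        by (intro exI conjI, rule step_ma[OF p inv u v x]) (use sz in simp)
    qed
  qed
qed


lemma scomp_affv:
  assumes p: "1 < p"
  shows "scomp p n (9 * n + 9) (\<lambda>w. affv w a)"
proof -
  have each: "\<forall>j\<in>{..<n}. scomp p n (2 + 2) (\<lambda>w. snd a j * (if w!j then 1 else 0))"
    using scomp_mul[OF scomp_const scomp_var] p by auto
  have s: "scomp p n (card {..<n} * (2 + 2 + 5) + 2) (\<lambda>w. \<Sum>j\<in>{..<n}. snd a j * (if w!j then 1 else 0))"
    by (rule scomp_sum[OF p _ each]) simp
  have s2: "scomp p n (2 + (card {..<n} * (2 + 2 + 5) + 2) + 5) (\<lambda>w. fst a + (\<Sum>j\<in>{..<n}. snd a j * (if w!j then 1 else 0)))"
    by (rule scomp_add[OF p scomp_const s]) (use p in simp)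
  have "scomp p n (9 * n + 9) (\<lambda>w. fst a + (\<Sum>j\<in>{..<n}. snd a j * (if w!j then 1 else 0)))"
    using scomp_mono[OF s2] by simp
  then show ?thesis
    by (rule scomp_cong) (simp add: affv_def)
qed

lemma scomp_node:
  assumes p: "1 < p" and wf: "swf p n P" and j: "j \<le> length P"
  shows "scomp p n (ssize P + 2) (\<lambda>w. svb 1 w P ! j)"
  unfolding scomp_def
proof (intro exI conjI allI impI)
  show "swf p n (P @ [[(LConst 1, j)]])" using wf j p by (simp add: swf_snoc labok_def)
  show "ssize (P @ [[(LConst 1, j)]]) \<le> ssize P + 2" by simp
  fix w :: "bool list"
  show "sv w (P @ [[(LConst 1, j)]]) mod p = svb 1 w P ! j mod p"
    by (simp add: sv_snoc snode_def)
qed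

lemma scomp_abp:
  assumes F: "scomp p n s f"
  shows "\<exists>G. wf_abp p n G \<and> abp_size G \<le> s + 1 \<and> (\<forall>w. length w = n \<longrightarrow> abp_value p G w = f w mod p)"
proof -
  obtain P where P: "swf p n P" "ssize P \<le> s" "\<forall>w. length w = n \<longrightarrow> sv w P mod p = f w mod p"
    using F unfolding scomp_def by blast
  show ?thesis
  proof (intro exI conjI allI impI)
    show "wf_abp p n (s2g P)" by (rule wf_s2g[OF P(1)])
    show "abp_size (s2g P) \<le> s + 1" using P(2) by (simp add: size_s2g)
    fix w :: "bool list" assume "length w = n"
    then show "abp_value p (s2g P) w = f w mod p" using P(3) sv_s2g[OF P(1)] by simp
  qed
qed

lemma bound_A1:
  fixes N p :: nat
  assumes N: "1 \<le> N"
  shows "p * (2 * (p * (p * (N + 7) + 16) + 2) + 5) + 3 \<le> (p * (2 * (p * (8 * p + 16) + 2) + 5) + 3) * N"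
proof -
  have h1: "p * (N + 7) + 16 \<le> p * (8 * N) + 16 * N" using N by (intro add_mono mult_le_mono) auto
  have h2: "p * (p * (N + 7) + 16) + 2 \<le> p * (p * (8 * N) + 16 * N) + 2 * N"
    using N h1 by (intro add_mono mult_le_mono) auto
  have h3: "p * (2 * (p * (p * (N + 7) + 16) + 2) + 5) + 3 \<le> p * (2 * (p * (p * (8 * N) + 16 * N) + 2 * N) + 5 * N) + 3 * N"
    using N h2 by (intro add_mono mult_le_mono) auto
  also have "\<dots> = (p * (2 * (p * (8 * p + 16) + 2) + 5) + 3) * N"
    by (simp add: algebra_simps)
  finally show ?thesis .
qed

lemma bound_A2:
  fixes n c k :: nat
  shows "(3 * n + 5) * (c * (n + 1) ^ k) + 9 * n + 11 \<le> (5 * c + 11) * (n + 1) ^ (k + 1)"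
proof -
  have X: "1 \<le> (n + 1) ^ k" by simp
  have a: "(3 * n + 5) * (c * (n + 1) ^ k) \<le> (5 * (n + 1)) * (c * (n + 1) ^ k)"
    by (intro mult_le_mono) auto
  have b: "9 * n + 11 \<le> 11 * (n + 1) * (n + 1) ^ k"
  proof -
    have "9 * n + 11 \<le> 11 * (n + 1)" by simp
    also have "\<dots> \<le> 11 * (n + 1) * (n + 1) ^ k" using X by simp
    finally show ?thesis .
  qed
  have "(3 * n + 5) * (c * (n + 1) ^ k) + 9 * n + 11 \<le> (5 * (n + 1)) * (c * (n + 1) ^ k) + 11 * (n + 1) * (n + 1) ^ k"
    using a b by linarith
  also have "\<dots> = (5 * c + 11) * (n + 1) ^ (k + 1)"
    by (simp add: algebra_simps)
  finally show ?thesis .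
qed

lemma scomp_final:
  assumes p: "prime p" and Fl: "scomp p n N fl" and Fv: "scomp p n N fv"
  shows "scomp p n (p * (2 * (p * (p * (N + 7) + 16) + 2) + 5) + 2) (\<lambda>w. if enc p (fl w mod p) (fv w mod p) \<in> S then 1 else 0)"
proof -
  have p1: "1 < p" using p prime_gt_1_nat by blast
  let ?F = "p * (p * (N + 7) + 16) + 2"
  let ?Sa = "\<lambda>a. {b. b < p \<and> enc p a b \<in> S}"
  have each: "\<forall>a\<in>{..<p}. scomp p n (?F + ?F) (\<lambda>w. (if fl w mod p \<in> {a} then 1 else 0) * (if fv w mod p \<in> ?Sa a then 1 else 0))"
  proof
    fix a assume a: "a \<in> {..<p}"
    have l: "scomp p n ?F (\<lambda>w. if fl w mod p \<in> {a} then 1 else 0)"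
      by (rule scomp_ind[OF p Fl]) (use a in auto)
    have v: "scomp p n ?F (\<lambda>w. if fv w mod p \<in> ?Sa a then 1 else 0)"
      by (rule scomp_ind[OF p Fv]) auto
    show "scomp p n (?F + ?F) (\<lambda>w. (if fl w mod p \<in> {a} then 1 else 0) * (if fv w mod p \<in> ?Sa a then 1 else 0))"
      by (rule scomp_mul[OF l v])
  qed
  have s: "scomp p n (card {..<p} * (?F + ?F + 5) + 2)
      (\<lambda>w. \<Sum>a\<in>{..<p}. (if fl w mod p \<in> {a} then 1 else 0) * (if fv w mod p \<in> ?Sa a then 1 else 0))"
    by (rule scomp_sum[OF p1 _ each]) simp
  have s': "scomp p n (p * (2 * ?F + 5) + 2)
      (\<lambda>w. \<Sum>a\<in>{..<p}. (if fl w mod p \<in> {a} then 1 else 0) * (if fv w mod p \<in> ?Sa a then 1 else 0))"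
  proof -
    have "card {..<p} * (?F + ?F + 5) + 2 = p * (2 * ?F + 5) + 2" by simp
    then show ?thesis using s by simp
  qed
  show ?thesis
  proof (rule scomp_cong[OF s'], intro allI impI)
    fix w :: "bool list"
    have lt: "fl w mod p < p" "fv w mod p < p" using p1 by auto
    have "(\<Sum>a\<in>{..<p}. (if fl w mod p \<in> {a} then 1 else 0) * (if fv w mod p \<in> ?Sa a then 1 else 0))
        = (\<Sum>a\<in>{..<p}. if a = fl w mod p then (if fv w mod p \<in> ?Sa a then 1 else 0) else (0::nat))"
      by (rule sum.cong) auto
    also have "\<dots> = (if fv w mod p \<in> ?Sa (fl w mod p) then 1 else 0)"
      using lt by (subst sum.delta) auto
    also have "\<dots> = (if enc p (fl w mod p) (fv w mod p) \<in> S then 1 else 0)"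
      using lt by simp
    finally show "(\<Sum>a\<in>{..<p}. (if fl w mod p \<in> {a} then 1 else 0) * (if fv w mod p \<in> ?Sa a then 1 else 0)) mod p
        = (if enc p (fl w mod p) (fv w mod p) \<in> S then 1 else 0) mod p" by simp
  qed
qed

lemma length_le_csize: "length c \<le> circuit_size c"
  unfolding circuit_size_def by simp

lemma nuP_sub:
  assumes p: "prime p"
  shows "nuP (Aalg p) \<subseteq> nuDet p"
proof
  fix L assume L: "L \<in> nuP (Aalg p)"
  obtain t \<iota> S c k where H: "\<forall>n. circuit (Aalg p) n (t n) \<and> circuit_size (t n) \<le> c * (n + 1) ^ k"
     "\<iota> True \<in> univ (Aalg p)" "\<iota> False \<in> univ (Aalg p)" "S \<subseteq> univ (Aalg p)"
     "L = {w. nudfa_accepts (Aalg p) t \<iota> S w}"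
    using L unfolding nuP_def mem_Collect_eq by (elim exE conjE) (rule that)
  have p1: "1 < p" using p prime_gt_1_nat by blast
  have io: "\<forall>b. \<iota> b < p * p" using H(2,3) by (auto intro: bool.induct)
  let ?K = "p * (2 * (p * (8 * p + 16) + 2) + 5) + 3"
  let ?C = "?K * (5 * c + 11)"
  have main: "\<exists>G T. wf_abp p n G \<and> abp_size G \<le> ?C * (n + 1) ^ (k + 1) \<and> T \<subseteq> {0..<p} \<and>
      (\<forall>w. length w = n \<longrightarrow> (w \<in> L \<longleftrightarrow> abp_value p G w \<in> T))" for n
  proof -
    have cn: "circuit (Aalg p) n (t n)" and csz: "circuit_size (t n) \<le> c * (n + 1) ^ k" using H(1) by auto
    have ne: "t n \<noteq> []" and cw: "cwf (Aalg p) n (t n)" using cn circuit_cwf by auto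
    obtain P idx aff where inv: "c2s_inv p n \<iota> (t n) P idx aff" and sP: "ssize P \<le> (3 * n + 5) * length (t n)"
      using c2s[OF p1 io cw] by blast
    let ?o = "length (t n) - 1"
    have o: "?o < length (t n)" using ne by (cases "t n") auto
    let ?N = "(3 * n + 5) * (c * (n + 1) ^ k) + 9 * n + 11"
    have lenb: "length (t n) \<le> c * (n + 1) ^ k" using length_le_csize[of "t n"] csz by linarith
    have sPN: "ssize P + 2 \<le> ?N"
    proof -
      have "ssize P \<le> (3 * n + 5) * (c * (n + 1) ^ k)" using sP mult_le_mono2[OF lenb, of "3 * n + 5"] by linarith
      then show ?thesis by linarith
    qed
    have Fl: "scomp p n ?N (\<lambda>w. affv w (aff ?o))"
      by (rule scomp_mono[OF scomp_affv[OF p1]]) simp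
    have Fv: "scomp p n ?N (\<lambda>w. svb 1 w P ! idx ?o)"
      by (rule scomp_mono[OF scomp_node[OF p1 inv_swf[OF inv] inv_idx[OF inv o]] sPN])
    have Q: "scomp p n (p * (2 * (p * (p * (?N + 7) + 16) + 2) + 5) + 2)
        (\<lambda>w. if enc p (affv w (aff ?o) mod p) (svb 1 w P ! idx ?o mod p) \<in> S then 1 else 0)"
      by (rule scomp_final[OF p Fl Fv])
    obtain G where G: "wf_abp p n G" "abp_size G \<le> p * (2 * (p * (p * (?N + 7) + 16) + 2) + 5) + 2 + 1"
      "\<forall>w. length w = n \<longrightarrow> abp_value p G w = (if enc p (affv w (aff ?o) mod p) (svb 1 w P ! idx ?o mod p) \<in> S then 1 else 0) mod p"
      using scomp_abp[OF Q] by blast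
    have N1: "1 \<le> ?N" by simp
    have "abp_size G \<le> ?K * ?N" using G(2) bound_A1[OF N1, of p] by simp
    also have "\<dots> \<le> ?K * ((5 * c + 11) * (n + 1) ^ (k + 1))"
      by (rule mult_le_mono2) (rule bound_A2)
    finally have szG: "abp_size G \<le> ?C * (n + 1) ^ (k + 1)" by (simp add: mult.assoc)
    show ?thesis
    proof (intro exI conjI allI impI)
      show "wf_abp p n G" by (rule G(1))
      show "abp_size G \<le> ?C * (n + 1) ^ (k + 1)" by (rule szG)
      show "{1} \<subseteq> {0..<p}" using p1 by simp
      fix w :: "bool list" assume w: "length w = n"
      let ?out = "circuit_eval (Aalg p) (t n) (map \<iota> w)"
      have out: "?out = circuit_vals (Aalg p) (t n) (map \<iota> w) ! ?o" by (rule circuit_eval_nth[OF ne])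
      have "?out = enc p (affv w (aff ?o) mod p) (svb 1 w P ! idx ?o mod p)"
        using inv_get[OF inv w o] out enc_dec by metis
      then have "w \<in> L \<longleftrightarrow> enc p (affv w (aff ?o) mod p) (svb 1 w P ! idx ?o mod p) \<in> S"
        using H(5) w by (simp add: nudfa_accepts_def)
      then show "w \<in> L \<longleftrightarrow> abp_value p G w \<in> {1}"
        using G(3) w p1 by auto
    qed
  qed
  show "L \<in> nuDet p"
    unfolding nuDet_def mem_Collect_eq
    by (rule exI[of _ ?C], rule exI[of _ "k + 1"]) (use main in blast)
qed


theorem mainTheorem7:
  fixes p :: nat
  assumes "prime p"
  shows "\<exists>A. finite_algebra A \<and> solvable_alg A \<and> has_malcev_term A \<and> nuP A = nuDet p"
proof -
  have p1: "1 < p" using assms prime_gt_1_nat by blast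
  show ?thesis
    by (rule exI[of _ "Aalg p"])
       (use p1 finite_A solvable_A malcev_A nuDet_sub[OF assms] nuP_sub[OF assms] in auto)
qed

end
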